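(* Let $\mathcal{X}$ be a locally compact, Hausdorff, second-countable single-target state space, and let $X_k$ be the (finite) set of targets at time step $k$. Suppose the set $Z_k$ of measurements at time $k$ is generated as follows: given $X_k$, each target $x\in X_k$ independently generates a finite set $Z\subset\mathbb{R}^{n_z}$ of measurements with multi-object density $f(Z\mid x)$ (an arbitrary density on finite subsets of $\mathbb{R}^{n_z}$), clutter is an independent Poisson point process (PPP) with intensity $\lambda^C(\cdot)$, and $Z_k$ is the union of all target-generated sets and the clutter. Let $Z_k=\{z_k^1,\dots,z_k^{m_k}\}$ and let $Z_k^1,\dots,Z_k^{2^{m_k}-1}$ be the nonempty subsets of $Z_k$. Assume the predicted density $f_{k|k-1}$ of $X_k$ is a Poisson multi-Bernoulli mixture (PMBM): $$f_{k|k-1}(X)=\sum_{Y\uplus W=X} f^{\mathrm{p}}_{k|k-1}(Y)\,f^{\mathrm{mbm}}_{k|k-1}(W),\qquad f^{\mathrm{p}}_{k|k-1}(X)=e^{-\int\lambda_{k|k-1}(x)dx}\prod_{x\in X}\lambda_{k|k-1}(x),$$ $$f^{\mathrm{mbm}}_{k|k-1}(X)=\sum_{a\in\mathcal{A}_{k|k-1}}w^{a}_{k|k-1}\sum_{\uplus_{l=1}^{n_{k|k-1}}X^l=X}\ \prod_{i=1}^{n_{k|k-1}}f^{i,a^i}_{k|k-1}(X^i),$$ where each $f^{i,a^i}_{k|k-1}$ is a Bernoulli density with existence probability $r^{i,a^i}_{k|k-1}$ and single-target density $f^{i,a^i}_{k|k-1}(x)$, each Bernoulli $i\in\{1,\dots,n_{k|k-1}\}$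 has local hypotheses $a^i\in\{1,\dots,h^i_{k|k-1}\}$ with local weights $w^{i,a^i}_{k|k-1}$ and associated sets of measurement pairs $\mathcal{M}^{i,a^i}_{k-1}\subseteq\mathcal{M}_{k-1}$, the set $\mathcal{A}_{k|k-1}$ of global hypotheses consists of all tuples $a=(a^1,\dots,a^{n_{k|k-1}})$ with $\bigcup_i\mathcal{M}^{i,a^i}_{k-1}=\mathcal{M}_{k-1}$ and $\mathcal{M}^{i,a^i}_{k-1}\cap\mathcal{M}^{j,a^j}_{k-1}=\emptyset$ for $i\neq j$, and $w^a_{k|k-1}\propto\prod_i w^{i,a^i}_{k|k-1}$ normalised to sum to one over $\mathcal{A}_{k|k-1}$. Then the updated density $f_{k|k}(X)\propto f(Z_k\mid X)f_{k|k-1}(X)$ (the posterior of $X_k$ given $Z_k$) is again a PMBM of the same form (with $k-1$ replaced by $k$ in the measurement-pair sets, global hypotheses $\mathcal{A}_{k|k}$ defined by the same covering/disjointness condition with respect to $\mathcal{M}_k$, and global weights $w^a_{k|k}\propto\prod_i w^{i,a^i}_{k|k}$), with the following parameters. (i) The number of Bernoulli components is $n_{k|k}=n_{k|k-1}+2^{m_k}-1$, and the PPP intensity is $\lambda_{k|k}(x)=f(\emptyset\mid x)\lambda_{k|k-1}(x)$. (ii) For each $i\in\{1,\dots,n_{k|k-1}\}$, $h^i_{k|k}=2^{m_k}h^i_{k|k-1}$. Missed-detection hypotheses $a^i\in\{1,\dots,h^i_{k|k-1}\}$ have $\mathcal{M}^{i,a^i}_k=\mathcal{M}^{i,a^i}_{k-1}$,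 and with $l^{i,a^i,\emptyset}_{k|k}=\langle f^{i,a^i}_{k|k-1},f(\emptyset\mid\cdot)\rangle$: $$w^{i,a^i}_{k|k}=w^{i,a^i}_{k|k-1}\big[1-r^{i,a^i}_{k|k-1}+r^{i,a^i}_{k|k-1}l^{i,a^i,\emptyset}_{k|k}\big],\quad r^{i,a^i}_{k|k}=\frac{r^{i,a^i}_{k|k-1}l^{i,a^i,\emptyset}_{k|k}}{1-r^{i,a^i}_{k|k-1}+r^{i,a^i}_{k|k-1}l^{i,a^i,\emptyset}_{k|k}},\quad f^{i,a^i}_{k|k}(x)=\frac{f(\emptyset\mid x)f^{i,a^i}_{k|k-1}(x)}{l^{i,a^i,\emptyset}_{k|k}}.$$ For a predicted local hypothesis $\tilde a^i\in\{1,\dots,h^i_{k|k-1}\}$ and $j\in\{1,\dots,2^{m_k}-1\}$, the local hypothesis $a^i=\tilde a^i+h^i_{k|k-1}j$ has $r^{i,a^i}_{k|k}=1$, $\mathcal{M}^{i,a^i}_k=\mathcal{M}^{i,\tilde a^i}_{k-1}\cup\{(k,p):z_k^p\in Z_k^j\}$, and with $l^{i,a^i,Z_k^j}_{k|k}=\langle f^{i,\tilde a^i}_{k|k-1},f(Z_k^j\mid\cdot)\rangle$: $$w^{i,a^i}_{k|k}=w^{i,\tilde a^i}_{k|k-1}r^{i,\tilde a^i}_{k|k-1}l^{i,a^i,Z_k^j}_{k|k},\qquad f^{i,a^i}_{k|k}(x)=\frac{f(Z_k^j\mid x)f^{i,\tilde a^i}_{k|k-1}(x)}{l^{i,a^i,Z_k^j}_{k|k}}.$$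 (iii) For each $j\in\{1,\dots,2^{m_k}-1\}$, the new Bernoulli with index $i=n_{k|k-1}+j$ has $h^i_{k|k}=2$ local hypotheses: one with $\mathcal{M}^{i,1}_k=\emptyset$, $w^{i,1}_{k|k}=1$, $r^{i,1}_{k|k}=0$; and one with $\mathcal{M}^{i,2}_k=\{(k,p):z_k^p\in Z_k^j\}$ and, with $l^{Z_k^j}_{k|k}=\langle\lambda_{k|k-1},f(Z_k^j\mid\cdot)\rangle$, $$w^{i,2}_{k|k}=\delta_1\big[|Z_k^j|\big]\prod_{z\in Z_k^j}\lambda^C(z)+l^{Z_k^j}_{k|k},\qquad r^{i,2}_{k|k}=\frac{l^{Z_k^j}_{k|k}}{w^{i,2}_{k|k}},\qquad f^{i,2}_{k|k}(x)=\frac{f(Z_k^j\mid x)\lambda_{k|k-1}(x)}{l^{Z_k^j}_{k|k}}.$$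
   Context: For finite sets, $\uplus$ denotes disjoint union, and sums of the form $\sum_{Y\uplus W=X}$ (resp. $\sum_{\uplus_l X^l=X}$) range over all ordered decompositions of the fixed set $X$ into mutually disjoint, possibly empty, subsets. A Bernoulli density with existence probability $r$ and single-target density $p$ is $f(\emptyset)=1-r$, $f(\{x\})=rp(x)$, and $f(X)=0$ if $|X|>1$. Measurement $z_t^j$ (the $j$-th measurement at time $t$) is referred to by the pair $(t,j)$, and $\mathcal{M}_t$ denotes the set of all such pairs up to and including time $t$. $\langle a,b\rangle=\int a(x)b(x)\,dx$ for real functions on the target space. $\delta_1[u]=1$ if $u=1$ and $0$ otherwise. *)

theory Defs
  imports "HOL-Analysis.Analysis" "HOL-Library.FuncSet"
begin

definition meas_pairs :: "(nat \<Rightarrow> nat) \<Rightarrow> nat \<Rightarrow> (nat \<times> nat) set" where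
  "meas_pairs mc T = {(t, j). 1 \<le> t \<and> t \<le> T \<and> 1 \<le> j \<and> j \<le> mc t}"

definition bern_dens :: "real \<Rightarrow> ('x \<Rightarrow> real) \<Rightarrow> 'x set \<Rightarrow> real" where
  "bern_dens r p X = (if X = {} then 1 - r else if card X = 1 then r * p (the_elem X) else 0)"

definition ppp_dens :: "'x measure \<Rightarrow> ('x \<Rightarrow> real) \<Rightarrow> 'x set \<Rightarrow> real" where
  "ppp_dens mu lam X = exp (- (\<integral>x. lam x \<partial>mu)) * (\<Prod>x\<in>X. lam x)"

definition decomps :: "nat \<Rightarrow> 'x set \<Rightarrow> (nat \<Rightarrow> 'x set) set" where
  "decomps n X = {Xs \<in> Pi\<^sub>E {1..n} (\<lambda>_. Pow X).
      (\<Union>i\<in>{1..n}. Xs i) = X \<and> (\<forall>i\<in>{1..n}. \<forall>j\<in>{1..n}. i \<noteq> j \<longrightarrow> Xs i \<inter> Xs j = {})}"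

definition glob_hyps :: "nat \<Rightarrow> (nat \<Rightarrow> nat) \<Rightarrow> (nat \<Rightarrow> nat \<Rightarrow> (nat \<times> nat) set)
     \<Rightarrow> (nat \<times> nat) set \<Rightarrow> (nat \<Rightarrow> nat) set" where
  "glob_hyps n h M Mall = {a \<in> Pi\<^sub>E {1..n} (\<lambda>i. {1..h i}).
      (\<Union>i\<in>{1..n}. M i (a i)) = Mall \<and>
      (\<forall>i\<in>{1..n}. \<forall>j\<in>{1..n}. i \<noteq> j \<longrightarrow> M i (a i) \<inter> M j (a j) = {})}"

definition mbm_dens :: "nat \<Rightarrow> (nat \<Rightarrow> nat) \<Rightarrow> (nat \<Rightarrow> nat \<Rightarrow> real) \<Rightarrow> (nat \<Rightarrow> nat \<Rightarrow> real)
     \<Rightarrow> (nat \<Rightarrow> nat \<Rightarrow> 'x \<Rightarrow> real) \<Rightarrow> (nat \<Rightarrow> nat \<Rightarrow> (nat \<times> nat) set) \<Rightarrow> (nat \<times> nat) set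
     \<Rightarrow> 'x set \<Rightarrow> real" where
  "mbm_dens n h w r f M Mall X =
     (\<Sum>a\<in>glob_hyps n h M Mall.
        ((\<Prod>i\<in>{1..n}. w i (a i)) / (\<Sum>a'\<in>glob_hyps n h M Mall. \<Prod>i\<in>{1..n}. w i (a' i))) *
        (\<Sum>Xs\<in>decomps n X. \<Prod>i\<in>{1..n}. bern_dens (r i (a i)) (f i (a i)) (Xs i)))"

definition pmbm_dens :: "'x measure \<Rightarrow> ('x \<Rightarrow> real) \<Rightarrow> nat \<Rightarrow> (nat \<Rightarrow> nat) \<Rightarrow> (nat \<Rightarrow> nat \<Rightarrow> real)
     \<Rightarrow> (nat \<Rightarrow> nat \<Rightarrow> real) \<Rightarrow> (nat \<Rightarrow> nat \<Rightarrow> 'x \<Rightarrow> real) \<Rightarrow> (nat \<Rightarrow> nat \<Rightarrow> (nat \<times> nat) set)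
     \<Rightarrow> (nat \<times> nat) set \<Rightarrow> 'x set \<Rightarrow> real" where
  "pmbm_dens mu lam n h w r f M Mall X =
     (\<Sum>Y\<in>Pow X. ppp_dens mu lam Y * mbm_dens n h w r f M Mall (X - Y))"

text \<open>Measurement likelihood f(Z|X): Z is the disjoint union of the sets Z^x (x \<in> X),
  generated independently with densities g(Z^x|x), and of PPP clutter Z^C with
  intensity lamC (w.r.t. Lebesgue measure); density of a union of independent RFSs.\<close>
definition meas_lik :: "('z::euclidean_space \<Rightarrow> real) \<Rightarrow> ('z set \<Rightarrow> 'x \<Rightarrow> real) \<Rightarrow> 'z set \<Rightarrow> 'x set \<Rightarrow> real" where
  "meas_lik lamC g Z X =
     (\<Sum>Zs\<in>{Zs \<in> Pi\<^sub>E X (\<lambda>_. Pow Z). \<forall>x\<in>X. \<forall>y\<in>X. x \<noteq> y \<longrightarrow> Zs x \<inter> Zs y = {}}.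
        exp (- (\<integral>z. lamC z \<partial>lborel)) * (\<Prod>z\<in>Z - (\<Union>x\<in>X. Zs x). lamC z) *
        (\<Prod>x\<in>X. g (Zs x) x))"

end

theory Submission
  imports Defs
begin

locale pmbm_setup =
  fixes lamC :: "'z::euclidean_space \<Rightarrow> real"
    and g :: "'z set \<Rightarrow> 'x \<Rightarrow> real"
    and mu :: "'x measure" and lam :: "'x \<Rightarrow> real"
    and k :: nat and mc :: "nat \<Rightarrow> nat"
    and zs :: "nat \<Rightarrow> 'z"
    and sub :: "nat \<Rightarrow> 'z set"
    and n :: nat and h :: "nat \<Rightarrow> nat"
    and w r :: "nat \<Rightarrow> nat \<Rightarrow> real"
    and f :: "nat \<Rightarrow> nat \<Rightarrow> 'x \<Rightarrow> real"
    and M :: "nat \<Rightarrow> nat \<Rightarrow> (nat \<times> nat) set"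
    and n' :: nat and lam' :: "'x \<Rightarrow> real" and h' :: "nat \<Rightarrow> nat"
    and w' r' :: "nat \<Rightarrow> nat \<Rightarrow> real"
    and f' :: "nat \<Rightarrow> nat \<Rightarrow> 'x \<Rightarrow> real"
    and M' :: "nat \<Rightarrow> nat \<Rightarrow> (nat \<times> nat) set"
  assumes lamC_nonneg: "\<forall>z. lamC z \<ge> 0"
    and k_pos: "k \<ge> 1"
    and zs_inj: "inj_on zs {1..mc k}"
    and sub_bij: "bij_betw sub {1..2 ^ mc k - 1} {S. S \<subseteq> zs ` {1..mc k} \<and> S \<noteq> {}}"
    and M_sub: "\<forall>i\<in>{1..n}. \<forall>a\<in>{1..h i}. M i a \<subseteq> meas_pairs mc (k - 1)"
    and w_nonneg: "\<forall>i\<in>{1..n}. \<forall>a\<in>{1..h i}. w i a \<ge> 0"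
    and r_range: "\<forall>i\<in>{1..n}. \<forall>a\<in>{1..h i}. 0 \<le> r i a \<and> r i a \<le> 1"
    and w_norm: "(\<Sum>a\<in>glob_hyps n h M (meas_pairs mc (k - 1)). \<Prod>i\<in>{1..n}. w i (a i)) > 0"
    and l_miss_pos: "\<forall>i\<in>{1..n}. \<forall>a\<in>{1..h i}. (\<integral>x. f i a x * g {} x \<partial>mu) > 0"
    and l_det_pos: "\<forall>i\<in>{1..n}. \<forall>a\<in>{1..h i}. \<forall>j\<in>{1..2 ^ mc k - 1}.
                      (\<integral>x. f i a x * g (sub j) x \<partial>mu) > 0"
    and l_new_pos: "\<forall>j\<in>{1..2 ^ mc k - 1}. (\<integral>x. lam x * g (sub j) x \<partial>mu) > 0"
    and upd_n: "n' = n + 2 ^ mc k - 1"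
    and upd_lam: "\<forall>x. lam' x = g {} x * lam x"
    and upd_h_old: "\<forall>i\<in>{1..n}. h' i = 2 ^ mc k * h i"
    and upd_miss: "\<forall>i\<in>{1..n}. \<forall>a\<in>{1..h i}.
        M' i a = M i a \<and>
        w' i a = w i a * (1 - r i a + r i a * (\<integral>x. f i a x * g {} x \<partial>mu)) \<and>
        r' i a = r i a * (\<integral>x. f i a x * g {} x \<partial>mu)
                 / (1 - r i a + r i a * (\<integral>x. f i a x * g {} x \<partial>mu)) \<and>
        (\<forall>x. f' i a x = g {} x * f i a x / (\<integral>x. f i a x * g {} x \<partial>mu))"
    and upd_det: "\<forall>i\<in>{1..n}. \<forall>b\<in>{1..h i}. \<forall>j\<in>{1..2 ^ mc k - 1}.
        r' i (b + h i * j) = 1 \<and>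
        M' i (b + h i * j) = M i b \<union> {(k, p) | p. p \<in> {1..mc k} \<and> zs p \<in> sub j} \<and>
        w' i (b + h i * j) = w i b * r i b * (\<integral>x. f i b x * g (sub j) x \<partial>mu) \<and>
        (\<forall>x. f' i (b + h i * j) x = g (sub j) x * f i b x / (\<integral>x. f i b x * g (sub j) x \<partial>mu))"
    and upd_new: "\<forall>j\<in>{1..2 ^ mc k - 1}.
        h' (n + j) = 2 \<and>
        M' (n + j) 1 = {} \<and> w' (n + j) 1 = 1 \<and> r' (n + j) 1 = 0 \<and>
        M' (n + j) 2 = {(k, p) | p. p \<in> {1..mc k} \<and> zs p \<in> sub j} \<and>
        w' (n + j) 2 = (if card (sub j) = 1 then \<Prod>z\<in>sub j. lamC z else 0)
                       + (\<integral>x. lam x * g (sub j) x \<partial>mu) \<and>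
        r' (n + j) 2 = (\<integral>x. lam x * g (sub j) x \<partial>mu) / w' (n + j) 2 \<and>
        (\<forall>x. f' (n + j) 2 x = g (sub j) x * lam x / (\<integral>x. lam x * g (sub j) x \<partial>mu))"
begin

definition "m = mc k"
definition NN :: nat where "NN = 2 ^ m - 1"
definition "Z = zs ` {1..m}"
definition "S j = (if j = 0 then {} else sub j)"
definition "idx T = (if T = {} then 0 else inv_into {1..NN} sub T)"
definition "pairs T = {(k, p) | p. p \<in> {1..m} \<and> zs p \<in> T}"
definition "PP = {(k, p) | p. p \<in> {1..m}}"
definition "Mk1 = meas_pairs mc (k - 1)"
definition "Mk = meas_pairs mc k"
definition "AA = glob_hyps n h M Mk1"
definition "AA' = glob_hyps n' h' M' Mk"

lemma finZ: "finite Z" unfolding Z_def by simp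

lemma sub_bij': "bij_betw sub {1..NN} {T. T \<subseteq> Z \<and> T \<noteq> {}}"
  using sub_bij unfolding NN_def Z_def m_def .

lemma sub_in: "j \<in> {1..NN} \<Longrightarrow> sub j \<subseteq> Z \<and> sub j \<noteq> {}"
proof -
  assume j: "j \<in> {1..NN}"
  have "sub j \<in> sub ` {1..NN}" using j by (rule imageI)
  also have "sub ` {1..NN} = {T. T \<subseteq> Z \<and> T \<noteq> {}}" using sub_bij' by (simp add: bij_betw_def)
  finally show ?thesis by simp
qed

lemma S_sub: "j \<le> NN \<Longrightarrow> S j \<subseteq> Z"
  using sub_in[of j] unfolding S_def by (cases "j = 0") auto

lemma S_ne: "j \<in> {1..NN} \<Longrightarrow> S j \<noteq> {}"
  using sub_in[of j] unfolding S_def by auto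

lemma S0[simp]: "S 0 = {}" unfolding S_def by simp

lemma S_pos: "j \<noteq> 0 \<Longrightarrow> S j = sub j" unfolding S_def by simp

lemma idx_S: "T \<subseteq> Z \<Longrightarrow> S (idx T) = T"
proof (cases "T = {}")
  case False
  assume T: "T \<subseteq> Z"
  have Tin: "T \<in> sub ` {1..NN}" using sub_bij' T False unfolding bij_betw_def by auto
  have "inv_into {1..NN} sub T \<in> {1..NN}" using Tin by (rule inv_into_into)
  then show ?thesis using False f_inv_into_f[OF Tin] unfolding idx_def S_def by auto
qed (simp add: idx_def)

lemma idx_pos: "T \<subseteq> Z \<Longrightarrow> T \<noteq> {} \<Longrightarrow> idx T \<in> {1..NN}"
proof -
  assume T: "T \<subseteq> Z" "T \<noteq> {}"
  have Tin: "T \<in> sub ` {1..NN}" using sub_bij' T unfolding bij_betw_def by auto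
  have "inv_into {1..NN} sub T \<in> {1..NN}" using Tin by (rule inv_into_into)
  then show ?thesis using T unfolding idx_def by auto
qed

lemma idx_range: "T \<subseteq> Z \<Longrightarrow> idx T \<le> NN"
  using idx_pos[of T] by (cases "T = {}") (auto simp: idx_def)

lemma S_idx: "j \<le> NN \<Longrightarrow> idx (S j) = j"
proof (cases "j = 0")
  case False
  assume j: "j \<le> NN"
  then have jj: "j \<in> {1..NN}" using False by auto
  have "S j \<noteq> {}" using S_ne jj .
  moreover have "inv_into {1..NN} sub (sub j) = j"
    using sub_bij' jj by (simp add: bij_betw_def inv_into_f_f)
  ultimately show ?thesis unfolding idx_def using False by (simp add: S_def)
qed (simp add: idx_def)

lemma S_inj: "i \<le> NN \<Longrightarrow> j \<le> NN \<Longrightarrow> S i = S j \<Longrightarrow> i = j"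
proof -
  assume a: "i \<le> NN" "j \<le> NN" "S i = S j"
  have "idx (S i) = i" using a(1) by (rule S_idx)
  moreover have "idx (S j) = j" using a(2) by (rule S_idx)
  ultimately show "i = j" using a(3) by argo
qed

lemma pairs_Un: "pairs (A \<union> B) = pairs A \<union> pairs B" unfolding pairs_def by auto
lemma pairs_Int: "pairs (A \<inter> B) = pairs A \<inter> pairs B" unfolding pairs_def by auto
lemma pairs_empty[simp]: "pairs {} = {}" unfolding pairs_def by auto
lemma pairs_UN: "pairs (\<Union>i\<in>I. B i) = (\<Union>i\<in>I. pairs (B i))" unfolding pairs_def by auto
lemma pairs_Z: "pairs Z = PP" unfolding pairs_def PP_def Z_def by blast
lemma pairs_sub: "pairs T \<subseteq> PP" unfolding pairs_def PP_def by auto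

lemma pairs_mem: "(t, p) \<in> pairs T \<longleftrightarrow> t = k \<and> p \<in> {1..m} \<and> zs p \<in> T"
  unfolding pairs_def by auto

lemma pairs_mono_iff: "A \<subseteq> Z \<Longrightarrow> pairs A \<subseteq> pairs B \<longleftrightarrow> A \<subseteq> B"
proof
  assume A: "A \<subseteq> Z" and P: "pairs A \<subseteq> pairs B"
  show "A \<subseteq> B"
  proof
    fix x assume x: "x \<in> A"
    then obtain p where p: "p \<in> {1..m}" "x = zs p" using A unfolding Z_def by auto
    then have "(k, p) \<in> pairs A" using x by (simp add: pairs_mem)
    then have "(k, p) \<in> pairs B" using P by auto
    then show "x \<in> B" using p by (simp add: pairs_mem)
  qed
next
  assume "A \<subseteq> B" then show "pairs A \<subseteq> pairs B" unfolding pairs_def by auto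
qed

lemma pairs_eq_iff: "A \<subseteq> Z \<Longrightarrow> B \<subseteq> Z \<Longrightarrow> pairs A = pairs B \<longleftrightarrow> A = B"
  using pairs_mono_iff[of A B] pairs_mono_iff[of B A] by auto

lemma pairs_empty_iff: "A \<subseteq> Z \<Longrightarrow> pairs A = {} \<longleftrightarrow> A = {}"
  using pairs_eq_iff[of A "{}"] by simp

lemma Mk_disj: "Mk1 \<inter> PP = {}"
  using k_pos unfolding Mk1_def PP_def meas_pairs_def by auto

lemma Mk_split: "Mk = Mk1 \<union> PP"
proof (rule set_eqI)
  fix x :: "nat \<times> nat"
  obtain t j where x: "x = (t, j)" by (cases x)
  show "x \<in> Mk \<longleftrightarrow> x \<in> Mk1 \<union> PP"
    unfolding x using k_pos by (cases "t = k") (auto simp: Mk_def Mk1_def PP_def meas_pairs_def m_def)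
qed


definition "Bf c x = (x - 1) mod h c + 1"
definition "Jf c x = (x - 1) div h c"
definition "Mo c x = (if c \<le> n then M c (Bf c x) else {})"
definition "D c x = (if c \<le> n then S (Jf c x) else if x = 2 then S (c - n) else {})"
definition "disjfam I F = (\<forall>c\<in>I. \<forall>d\<in>I. c \<noteq> d \<longrightarrow> F c \<inter> F d = {})"

lemma n'_eq: "n' = n + NN"
  using upd_n unfolding NN_def m_def by simp

lemma AA_ne: "AA \<noteq> {}"
  using w_norm unfolding AA_def Mk1_def by (metis less_irrefl sum.empty)

lemma h_pos: "i \<in> {1..n} \<Longrightarrow> h i > 0"
proof -
  assume i: "i \<in> {1..n}"
  obtain a where "a \<in> AA" using AA_ne by auto
  then have "a i \<in> {1..h i}" using i unfolding AA_def glob_hyps_def by (auto simp: PiE_iff)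
  then show ?thesis by auto
qed

lemma BJ_old: "i \<in> {1..n} \<Longrightarrow> b \<in> {1..h i} \<Longrightarrow> Bf i (b + h i * j) = b \<and> Jf i (b + h i * j) = j"
proof -
  assume i: "i \<in> {1..n}" and b: "b \<in> {1..h i}"
  have hp: "h i \<noteq> 0" using h_pos i by simp
  obtain b0 where b0: "b = Suc b0" using b by (cases b) auto
  have e: "b + h i * j - 1 = b0 + h i * j" using b0 by simp
  have lt: "b0 < h i" using b b0 by auto
  have m1: "(b0 + h i * j) mod h i = b0" using lt by (simp add: mod_mult_self2)
  have m2: "(b0 + h i * j) div h i = j" using lt hp by (simp add: div_mult_self2)
  show ?thesis unfolding Bf_def Jf_def e m1 m2 using b0 by simp
qed

lemma repr_old: "i \<in> {1..n} \<Longrightarrow> x \<in> {1..h' i} \<Longrightarrow>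
   Bf i x \<in> {1..h i} \<and> Jf i x \<le> NN \<and> x = Bf i x + h i * Jf i x"
proof -
  assume i: "i \<in> {1..n}" and x: "x \<in> {1..h' i}"
  have hp: "h i > 0" using h_pos i .
  have p2: "(2::nat) ^ m \<ge> 1" by simp
  have NN1: "NN + 1 = 2 ^ m" unfolding NN_def using p2 by linarith
  have h': "h' i = (NN + 1) * h i" using upd_h_old i unfolding NN1 m_def by simp
  have d: "(x - 1) mod h i + h i * ((x - 1) div h i) = x - 1" by (rule mod_mult_div_eq)
  have "x - 1 < (NN + 1) * h i" using x h' by auto
  then have "(x - 1) div h i < NN + 1" using hp by (simp add: div_less_iff_less_mult)
  moreover have "(x - 1) mod h i < h i" using hp by simp
  moreover have "x = ((x - 1) mod h i + 1) + h i * ((x - 1) div h i)" using x d by (simp only: atLeastAtMost_iff) linarith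
  ultimately show ?thesis unfolding Bf_def Jf_def atLeastAtMost_iff
    by (intro conjI; linarith)
qed

lemma M'_old: "i \<in> {1..n} \<Longrightarrow> b \<in> {1..h i} \<Longrightarrow> j \<le> NN \<Longrightarrow> M' i (b + h i * j) = M i b \<union> pairs (S j)"
proof (cases "j = 0")
  case True
  assume "i \<in> {1..n}" "b \<in> {1..h i}"
  then show ?thesis using upd_miss True by simp
next
  case False
  assume "i \<in> {1..n}" "b \<in> {1..h i}" "j \<le> NN"
  then have "j \<in> {1..2 ^ mc k - 1}" using False unfolding NN_def m_def by auto
  then show ?thesis using upd_det \<open>i \<in> {1..n}\<close> \<open>b \<in> {1..h i}\<close> False
    unfolding pairs_def S_def m_def by auto
qed

lemma new_range: "c \<in> {1..n'} \<Longrightarrow> \<not> c \<le> n \<Longrightarrow> c - n \<in> {1..NN} \<and> c = n + (c - n)"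
  using n'_eq by auto

lemma new_facts: "c \<in> {1..n'} \<Longrightarrow> \<not> c \<le> n \<Longrightarrow>
        h' c = 2 \<and>
        M' c 1 = {} \<and> w' c 1 = 1 \<and> r' c 1 = 0 \<and>
        M' c 2 = pairs (S (c - n)) \<and>
        w' c 2 = (if card (S (c - n)) = 1 then \<Prod>z\<in>S (c - n). lamC z else 0)
                       + (\<integral>x. lam x * g (S (c - n)) x \<partial>mu) \<and>
        r' c 2 = (\<integral>x. lam x * g (S (c - n)) x \<partial>mu) / w' c 2 \<and>
        (\<forall>x. f' c 2 x = g (S (c - n)) x * lam x / (\<integral>x. lam x * g (S (c - n)) x \<partial>mu))"
proof -
  assume c: "c \<in> {1..n'}" "\<not> c \<le> n"
  define j where "j = c - n"
  have cj: "c = n + j" using c unfolding j_def by auto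
  have j: "j \<in> {1..2 ^ mc k - 1}" using new_range[OF c] unfolding NN_def m_def j_def by auto
  have Sj: "S j = sub j" using j by (simp add: S_def)
  have P: "pairs (sub j) = {(k, p) | p. p \<in> {1..mc k} \<and> zs p \<in> sub j}" unfolding pairs_def m_def ..
  have U: "h' (n + j) = 2 \<and>
        M' (n + j) 1 = {} \<and> w' (n + j) 1 = 1 \<and> r' (n + j) 1 = 0 \<and>
        M' (n + j) 2 = {(k, p) | p. p \<in> {1..mc k} \<and> zs p \<in> sub j} \<and>
        w' (n + j) 2 = (if card (sub j) = 1 then \<Prod>z\<in>sub j. lamC z else 0)
                       + (\<integral>x. lam x * g (sub j) x \<partial>mu) \<and>
        r' (n + j) 2 = (\<integral>x. lam x * g (sub j) x \<partial>mu) / w' (n + j) 2 \<and>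
        (\<forall>x. f' (n + j) 2 x = g (sub j) x * lam x / (\<integral>x. lam x * g (sub j) x \<partial>mu))"
    using upd_new j by (rule bspec)
  show ?thesis unfolding cj[symmetric] j_def[symmetric] Sj P using U unfolding cj[symmetric] .
qed

lemma h'_new: "c \<in> {1..n'} \<Longrightarrow> \<not> c \<le> n \<Longrightarrow> h' c = 2"
  using new_facts by blast

lemma M'_dec: "c \<in> {1..n'} \<Longrightarrow> x \<in> {1..h' c} \<Longrightarrow>
   M' c x = Mo c x \<union> pairs (D c x) \<and> Mo c x \<subseteq> Mk1 \<and> D c x \<subseteq> Z"
proof (cases "c \<le> n")
  case True
  assume c: "c \<in> {1..n'}" and x: "x \<in> {1..h' c}"
  then have c1: "c \<in> {1..n}" using True by auto
  note R = repr_old[OF c1 x]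
  have "M' c x = M c (Bf c x) \<union> pairs (S (Jf c x))"
    using M'_old[OF c1, of "Bf c x" "Jf c x"] R by simp
  moreover have "M c (Bf c x) \<subseteq> Mk1" using M_sub c1 R unfolding Mk1_def by auto
  moreover have "S (Jf c x) \<subseteq> Z" using S_sub R by auto
  ultimately show ?thesis unfolding Mo_def D_def using True by simp
next
  case False
  assume c: "c \<in> {1..n'}" and x: "x \<in> {1..h' c}"
  note NR = new_range[OF c False]
  note NF = new_facts[OF c False]
  have x12: "x = 1 \<or> x = 2" using x NF by auto
  have S_le: "S (c - n) \<subseteq> Z" using S_sub NR by auto
  show ?thesis using x12 S_le NF unfolding Mo_def D_def using False by auto
qed

lemma split_family:
  assumes "\<forall>c\<in>I. A c \<subseteq> Mk1 \<and> B c \<subseteq> Z"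
  shows "((\<Union>c\<in>I. A c \<union> pairs (B c)) = Mk \<and> disjfam I (\<lambda>c. A c \<union> pairs (B c))) \<longleftrightarrow>
     ((\<Union>c\<in>I. A c) = Mk1 \<and> disjfam I A \<and> (\<Union>c\<in>I. B c) = Z \<and> disjfam I B)"
proof -
  define UA where "UA = (\<Union>c\<in>I. A c)"
  define UB where "UB = (\<Union>c\<in>I. B c)"
  have U: "(\<Union>c\<in>I. A c \<union> pairs (B c)) = UA \<union> pairs UB"
    unfolding UA_def UB_def pairs_UN by blast
  have UA: "UA \<subseteq> Mk1" using assms unfolding UA_def by blast
  have UB: "UB \<subseteq> Z" using assms unfolding UB_def by blast
  have PU: "pairs UB \<subseteq> PP" by (rule pairs_sub)
  have e1: "UA \<union> pairs UB = Mk \<longleftrightarrow> UA = Mk1 \<and> UB = Z"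
  proof
    assume E: "UA \<union> pairs UB = Mk"
    have "UA = Mk1"
    proof
      show "UA \<subseteq> Mk1" using UA .
      show "Mk1 \<subseteq> UA"
      proof
        fix x assume x: "x \<in> Mk1"
        then have "x \<in> UA \<union> pairs UB" using E Mk_split by simp
        moreover have "x \<notin> pairs UB" using x PU Mk_disj by blast
        ultimately show "x \<in> UA" by simp
      qed
    qed
    moreover have "pairs UB = pairs Z"
    proof
      show "pairs UB \<subseteq> pairs Z" using UB by (simp add: pairs_mono_iff)
      show "pairs Z \<subseteq> pairs UB"
      proof
        fix x assume x: "x \<in> pairs Z"
        then have "x \<in> UA \<union> pairs UB" using E Mk_split pairs_Z by simp
        moreover have "x \<notin> UA" using x UA Mk_disj pairs_Z by blast
        ultimately show "x \<in> pairs UB" by simp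
      qed
    qed
    then have "UB = Z" using pairs_eq_iff[OF UB] finZ by simp
    ultimately show "UA = Mk1 \<and> UB = Z" by simp
  next
    assume "UA = Mk1 \<and> UB = Z"
    then show "UA \<union> pairs UB = Mk" using Mk_split pairs_Z by simp
  qed
  have e2: "(A c \<union> pairs (B c)) \<inter> (A d \<union> pairs (B d)) = {} \<longleftrightarrow> A c \<inter> A d = {} \<and> B c \<inter> B d = {}"
    if "c \<in> I" "d \<in> I" for c d
  proof -
    have a1: "A c \<subseteq> Mk1" "A d \<subseteq> Mk1" using assms that by auto
    have a2: "pairs (B c) \<subseteq> PP" "pairs (B d) \<subseteq> PP" by (rule pairs_sub)+
    have "(A c \<union> pairs (B c)) \<inter> (A d \<union> pairs (B d)) = (A c \<inter> A d) \<union> (pairs (B c) \<inter> pairs (B d))"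
      using a1 a2 Mk_disj by blast
    also have "pairs (B c) \<inter> pairs (B d) = pairs (B c \<inter> B d)" by (simp add: pairs_Int)
    finally have eq: "(A c \<union> pairs (B c)) \<inter> (A d \<union> pairs (B d)) = (A c \<inter> A d) \<union> pairs (B c \<inter> B d)" .
    have "B c \<inter> B d \<subseteq> Z" using assms that by blast
    then have "pairs (B c \<inter> B d) = {} \<longleftrightarrow> B c \<inter> B d = {}" by (rule pairs_empty_iff)
    then show ?thesis unfolding eq by blast
  qed
  have d: "disjfam I (\<lambda>c. A c \<union> pairs (B c)) \<longleftrightarrow> disjfam I A \<and> disjfam I B"
  proof
    assume L: "disjfam I (\<lambda>c. A c \<union> pairs (B c))"
    have "A c \<inter> A d = {} \<and> B c \<inter> B d = {}" if "c \<in> I" "d \<in> I" "c \<noteq> d" for c d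
      using L that e2[of c d] unfolding disjfam_def by simp
    then show "disjfam I A \<and> disjfam I B" unfolding disjfam_def by simp
  next
    assume R: "disjfam I A \<and> disjfam I B"
    have "(A c \<union> pairs (B c)) \<inter> (A d \<union> pairs (B d)) = {}" if "c \<in> I" "d \<in> I" "c \<noteq> d" for c d
      using R that e2[of c d] unfolding disjfam_def by simp
    then show "disjfam I (\<lambda>c. A c \<union> pairs (B c))" unfolding disjfam_def by simp
  qed
  show ?thesis unfolding U d UA_def[symmetric] UB_def[symmetric] e1 by blast
qed


lemma disjfam_cong: "(\<And>c. c \<in> I \<Longrightarrow> F c = G c) \<Longrightarrow> disjfam I F = disjfam I G"
  unfolding disjfam_def by auto

lemma glob_char:
  assumes a': "a' \<in> Pi\<^sub>E {1..n'} (\<lambda>c. {1..h' c})"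
  shows "a' \<in> AA' \<longleftrightarrow> (restrict (\<lambda>c. Bf c (a' c)) {1..n} \<in> AA \<and>
           (\<Union>c\<in>{1..n'}. D c (a' c)) = Z \<and> disjfam {1..n'} (\<lambda>c. D c (a' c)))"
proof -
  have dec: "\<And>c. c \<in> {1..n'} \<Longrightarrow> M' c (a' c) = Mo c (a' c) \<union> pairs (D c (a' c)) \<and>
       Mo c (a' c) \<subseteq> Mk1 \<and> D c (a' c) \<subseteq> Z"
    using a' M'_dec by (auto simp: PiE_iff)
  have "a' \<in> AA' \<longleftrightarrow> (\<Union>c\<in>{1..n'}. M' c (a' c)) = Mk \<and> disjfam {1..n'} (\<lambda>c. M' c (a' c))"
    using a' unfolding AA'_def glob_hyps_def disjfam_def by blast
  also have "(\<Union>c\<in>{1..n'}. M' c (a' c)) = (\<Union>c\<in>{1..n'}. Mo c (a' c) \<union> pairs (D c (a' c)))"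
    using dec by (intro SUP_cong) auto
  also have "disjfam {1..n'} (\<lambda>c. M' c (a' c)) = disjfam {1..n'} (\<lambda>c. Mo c (a' c) \<union> pairs (D c (a' c)))"
    using dec by (intro disjfam_cong) auto
  also have "((\<Union>c\<in>{1..n'}. Mo c (a' c) \<union> pairs (D c (a' c))) = Mk \<and>
        disjfam {1..n'} (\<lambda>c. Mo c (a' c) \<union> pairs (D c (a' c)))) \<longleftrightarrow>
      ((\<Union>c\<in>{1..n'}. Mo c (a' c)) = Mk1 \<and> disjfam {1..n'} (\<lambda>c. Mo c (a' c)) \<and>
       (\<Union>c\<in>{1..n'}. D c (a' c)) = Z \<and> disjfam {1..n'} (\<lambda>c. D c (a' c)))"
    using dec by (intro split_family) auto
  also have "(\<Union>c\<in>{1..n'}. Mo c (a' c)) = (\<Union>c\<in>{1..n}. M c (Bf c (a' c)))"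
    unfolding Mo_def using n'_eq by (auto split: if_splits; fastforce)
  also have "disjfam {1..n'} (\<lambda>c. Mo c (a' c)) = disjfam {1..n} (\<lambda>c. M c (Bf c (a' c)))"
    unfolding Mo_def disjfam_def using n'_eq by (auto split: if_splits; fastforce)
  also have "restrict (\<lambda>c. Bf c (a' c)) {1..n} \<in> AA \<longleftrightarrow>
      (\<Union>c\<in>{1..n}. M c (Bf c (a' c))) = Mk1 \<and> disjfam {1..n} (\<lambda>c. M c (Bf c (a' c)))"
  proof -
    have "restrict (\<lambda>c. Bf c (a' c)) {1..n} \<in> Pi\<^sub>E {1..n} (\<lambda>c. {1..h c})"
      using a' repr_old n'_eq by (auto simp: PiE_iff)
    then show ?thesis unfolding AA_def glob_hyps_def disjfam_def by auto
  qed
  ultimately show ?thesis by blast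
qed

definition "AS X = {Zs \<in> Pi\<^sub>E X (\<lambda>_. Pow Z). \<forall>x\<in>X. \<forall>y\<in>X. x \<noteq> y \<longrightarrow> Zs x \<inter> Zs y = {}}"
definition "IL X = (SIGMA Y:Pow X. SIGMA a:AA. SIGMA Xs:decomps n (X - Y). AS X)"
definition "IR X = (SIGMA Y:Pow X. SIGMA a:AA'. decomps n' (X - Y))"
definition "le1 T = (\<forall>x\<in>T. \<forall>y\<in>T. x = y)"

definition "niceL = (\<lambda>(Y, a, Xs, Zs). \<forall>i\<in>{1..n}. le1 (Xs i))"
definition "niceR = (\<lambda>(Y, a, Xs). \<forall>c\<in>{1..n'}. le1 (Xs c) \<and>
     (c \<le> n \<longrightarrow> Jf c (a c) \<noteq> 0 \<longrightarrow> Xs c \<noteq> {}) \<and>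
     (\<not> c \<le> n \<longrightarrow> (a c = 1 \<longrightarrow> Xs c = {}) \<and> (a c = 2 \<longrightarrow> Xs c = {} \<longrightarrow> card (S (c - n)) = 1)))"

definition "PhiY Y Zs = {y \<in> Y. Zs y = {}}"
definition "PhiXs Y Xs Zs = (\<lambda>c. if c \<in> {1..n} then Xs c else if c \<in> {n+1..n'} then {y \<in> Y. Zs y = S (c - n)} else undefined)"
definition "Phia X Y a Xs Zs = (\<lambda>c. if c \<in> {1..n} then a c + h c * idx (\<Union>(Zs ` Xs c))
    else if c \<in> {n+1..n'} then (if (\<exists>y\<in>Y. Zs y = S (c - n)) \<or> (\<exists>z. S (c - n) = {z} \<and> z \<notin> \<Union>(Zs ` X)) then 2 else 1)
    else undefined)"
definition "Phi X = (\<lambda>(Y, a, Xs, Zs). (PhiY Y Zs, Phia X Y a Xs Zs, PhiXs Y Xs Zs))"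

definition "PsiY Y Xs = Y \<union> (\<Union>c\<in>{n+1..n'}. Xs c)"
definition "Psia a = restrict (\<lambda>c. Bf c (a c)) {1..n}"
definition "PsiXs Xs = restrict Xs {1..n}"
definition "PsiZs X a Xs = restrict (\<lambda>x. \<Union>c\<in>{c \<in> {1..n'}. x \<in> Xs c}. D c (a c)) X"
definition "Psi X = (\<lambda>(Y, a, Xs). (PsiY Y Xs, Psia a, PsiXs Xs, PsiZs X a Xs))"



lemma bern_empty: "bern_dens rr p {} = 1 - rr" unfolding bern_dens_def by simp
lemma bern_single: "bern_dens rr p {x} = rr * p x" unfolding bern_dens_def by simp
lemma bern_big: "finite T \<Longrightarrow> \<not> le1 T \<Longrightarrow> bern_dens rr p T = 0"
proof -
  assume T: "finite T" "\<not> le1 T"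
  then obtain x y where "x \<in> T" "y \<in> T" "x \<noteq> y" unfolding le1_def by blast
  then have "card {x, y} \<le> card T" using T by (intro card_mono) auto
  then have "card T \<ge> 2" using \<open>x \<noteq> y\<close> by simp
  moreover have "T \<noteq> {}" using \<open>x \<in> T\<close> by auto
  ultimately show ?thesis unfolding bern_dens_def by auto
qed

lemma le1_cases: "le1 T \<Longrightarrow> T = {} \<or> (\<exists>x. T = {x})"
  unfolding le1_def by blast

lemma miss_facts: "i \<in> {1..n} \<Longrightarrow> b \<in> {1..h i} \<Longrightarrow>
   (\<integral>x. f i b x * g {} x \<partial>mu) > 0 \<and> 1 - r i b + r i b * (\<integral>x. f i b x * g {} x \<partial>mu) > 0"
proof -
  assume i: "i \<in> {1..n}" and b: "b \<in> {1..h i}"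
  define l where "l = (\<integral>x. f i b x * g {} x \<partial>mu)"
  have l: "l > 0" using l_miss_pos i b unfolding l_def by auto
  have r: "0 \<le> r i b" "r i b \<le> 1" using r_range i b by auto
  have "1 - r i b + r i b * l > 0"
  proof (cases "r i b = 1")
    case True then show ?thesis using l by simp
  next
    case False
    then have "1 - r i b > 0" using r by simp
    moreover have "r i b * l \<ge> 0" using r l by simp
    ultimately show ?thesis by linarith
  qed
  then show ?thesis using l unfolding l_def by simp
qed

lemma Q_old_empty: "i \<in> {1..n} \<Longrightarrow> b \<in> {1..h i} \<Longrightarrow>
   w' i b * bern_dens (r' i b) (f' i b) {} = w i b * bern_dens (r i b) (f i b) {}"
proof -
  assume i: "i \<in> {1..n}" and b: "b \<in> {1..h i}"
  define l where "l = (\<integral>x. f i b x * g {} x \<partial>mu)"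
  define d where "d = 1 - r i b + r i b * l"
  have d: "d > 0" using miss_facts[OF i b] unfolding d_def l_def by simp
  have U: "w' i b = w i b * d" "r' i b = r i b * l / d" using upd_miss i b unfolding d_def l_def by auto
  have "w i b * d * (1 - r i b * l / d) = w i b * (d - r i b * l)" using d by (simp add: field_simps)
  also have "d - r i b * l = 1 - r i b" unfolding d_def by simp
  finally show ?thesis unfolding bern_empty U by simp
qed

lemma Q_old: "i \<in> {1..n} \<Longrightarrow> b \<in> {1..h i} \<Longrightarrow> j \<le> NN \<Longrightarrow>
   w' i (b + h i * j) * bern_dens (r' i (b + h i * j)) (f' i (b + h i * j)) {x} =
   w i b * bern_dens (r i b) (f i b) {x} * g (S j) x"
proof (cases "j = 0")
  case True
  assume i: "i \<in> {1..n}" and b: "b \<in> {1..h i}"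
  define l where "l = (\<integral>x. f i b x * g {} x \<partial>mu)"
  define d where "d = 1 - r i b + r i b * l"
  have d: "d > 0" and l: "l > 0" using miss_facts[OF i b] unfolding d_def l_def by simp_all
  have U: "w' i b = w i b * d" "r' i b = r i b * l / d" "f' i b x = g {} x * f i b x / l"
    using upd_miss i b unfolding d_def l_def by auto
  show ?thesis unfolding bern_single True using d l by (simp add: U field_simps)
next
  case False
  assume i: "i \<in> {1..n}" and b: "b \<in> {1..h i}" and j: "j \<le> NN"
  have j': "j \<in> {1..2 ^ mc k - 1}" using j False unfolding NN_def m_def by auto
  define l where "l = (\<integral>x. f i b x * g (sub j) x \<partial>mu)"
  have l: "l > 0" using l_det_pos i b j' unfolding l_def by auto
  have U: "w' i (b + h i * j) = w i b * r i b * l" "r' i (b + h i * j) = 1"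
    "f' i (b + h i * j) x = g (sub j) x * f i b x / l"
    using upd_det i b j' unfolding l_def by auto
  show ?thesis unfolding bern_single U S_pos[OF False] using l by (simp add: field_simps)
qed

lemma Z_det: "i \<in> {1..n} \<Longrightarrow> b \<in> {1..h i} \<Longrightarrow> j \<in> {1..NN} \<Longrightarrow>
   bern_dens (r' i (b + h i * j)) p {} = 0"
proof -
  assume i: "i \<in> {1..n}" and b: "b \<in> {1..h i}" and j: "j \<in> {1..NN}"
  have j': "j \<in> {1..2 ^ mc k - 1}" using j unfolding NN_def m_def by auto
  have "r' i (b + h i * j) = 1" using upd_det i b j' by auto
  then show ?thesis unfolding bern_empty by simp
qed

lemma lnew_pos: "c \<in> {1..n'} \<Longrightarrow> \<not> c \<le> n \<Longrightarrow> (\<integral>x. lam x * g (S (c - n)) x \<partial>mu) > 0"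
proof -
  assume c: "c \<in> {1..n'}" "\<not> c \<le> n"
  have j: "c - n \<in> {1..2 ^ mc k - 1}" using new_range[OF c] unfolding NN_def m_def by auto
  then show ?thesis using l_new_pos S_pos[of "c - n"] by auto
qed

lemma w'2_pos: "c \<in> {1..n'} \<Longrightarrow> \<not> c \<le> n \<Longrightarrow> w' c 2 > 0"
proof -
  assume c: "c \<in> {1..n'}" "\<not> c \<le> n"
  have "(if card (S (c - n)) = 1 then \<Prod>z\<in>S (c - n). lamC z else 0) \<ge> 0"
    using lamC_nonneg by (simp add: prod_nonneg)
  then show ?thesis using new_facts[OF c] lnew_pos[OF c] by linarith
qed

lemma Q_new1: "c \<in> {1..n'} \<Longrightarrow> \<not> c \<le> n \<Longrightarrow> w' c 1 * bern_dens (r' c 1) (f' c 1) {} = 1"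
  using new_facts[of c] by (simp add: bern_empty)

lemma Q_new2: "c \<in> {1..n'} \<Longrightarrow> \<not> c \<le> n \<Longrightarrow>
    w' c 2 * bern_dens (r' c 2) (f' c 2) {y} = g (S (c - n)) y * lam y"
proof -
  assume c: "c \<in> {1..n'}" "\<not> c \<le> n"
  note NF = new_facts[OF c]
  have w: "w' c 2 > 0" using w'2_pos[OF c] .
  have l: "(\<integral>x. lam x * g (S (c - n)) x \<partial>mu) > 0" using lnew_pos[OF c] .
  have r2: "r' c 2 = (\<integral>x. lam x * g (S (c - n)) x \<partial>mu) / w' c 2" using NF by blast
  have f2: "f' c 2 y = g (S (c - n)) y * lam y / (\<integral>x. lam x * g (S (c - n)) x \<partial>mu)" using NF by blast
  show ?thesis unfolding bern_single r2 f2 using w l by (simp add: field_simps)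
qed

lemma Q_new3: "c \<in> {1..n'} \<Longrightarrow> \<not> c \<le> n \<Longrightarrow> S (c - n) = {z} \<Longrightarrow>
    w' c 2 * bern_dens (r' c 2) (f' c 2) {} = lamC z"
proof -
  assume c: "c \<in> {1..n'}" "\<not> c \<le> n" and z: "S (c - n) = {z}"
  note NF = new_facts[OF c]
  have w: "w' c 2 > 0" using w'2_pos[OF c] .
  have w2: "w' c 2 = lamC z + (\<integral>x. lam x * g (S (c - n)) x \<partial>mu)" using NF z by simp
  have r2: "r' c 2 = (\<integral>x. lam x * g (S (c - n)) x \<partial>mu) / w' c 2" using NF by blast
  have "w' c 2 * (1 - (\<integral>x. lam x * g (S (c - n)) x \<partial>mu) / w' c 2) = w' c 2 - (\<integral>x. lam x * g (S (c - n)) x \<partial>mu)"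
    using w by (simp add: field_simps)
  then show ?thesis unfolding bern_empty r2 using w2 by simp
qed

lemma Z_new1: "c \<in> {1..n'} \<Longrightarrow> \<not> c \<le> n \<Longrightarrow> finite T \<Longrightarrow> T \<noteq> {} \<Longrightarrow> bern_dens (r' c 1) p T = 0"
  using new_facts[of c] unfolding bern_dens_def by auto

lemma Z_new2: "c \<in> {1..n'} \<Longrightarrow> \<not> c \<le> n \<Longrightarrow> card (S (c - n)) \<noteq> 1 \<Longrightarrow> bern_dens (r' c 2) p {} = 0"
proof -
  assume c: "c \<in> {1..n'}" "\<not> c \<le> n" and cd: "card (S (c - n)) \<noteq> 1"
  note NF = new_facts[OF c]
  have l: "(\<integral>x. lam x * g (S (c - n)) x \<partial>mu) > 0" using lnew_pos[OF c] .
  have "r' c 2 = 1" using NF cd l by simp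
  then show ?thesis unfolding bern_empty by simp
qed

lemma h'_old: "i \<in> {1..n} \<Longrightarrow> h' i = (NN + 1) * h i"
proof -
  assume i: "i \<in> {1..n}"
  have p2: "(2::nat) ^ m \<ge> 1" by simp
  have NN1: "NN + 1 = 2 ^ m" unfolding NN_def using p2 by linarith
  show ?thesis using upd_h_old i unfolding NN1 m_def by simp
qed

lemma S_ne': "j \<in> {1..NN} \<Longrightarrow> S j = {} \<Longrightarrow> False" using S_ne by blast

definition "TL X = (\<lambda>(Y, a, Xs, Zs). (\<Prod>y\<in>Y. lam y) * (\<Prod>i\<in>{1..n}. w i (a i)) *
   (\<Prod>i\<in>{1..n}. bern_dens (r i (a i)) (f i (a i)) (Xs i)) * (\<Prod>z\<in>Z - \<Union>(Zs ` X). lamC z) *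
   (\<Prod>x\<in>X. g (Zs x) x))"
definition "TR = (\<lambda>(Y, a, Xs). (\<Prod>y\<in>Y. lam' y) * (\<Prod>c\<in>{1..n'}. w' c (a c)) *
   (\<Prod>c\<in>{1..n'}. bern_dens (r' c (a c)) (f' c (a c)) (Xs c)))"

lemma prod_UN_disj: "finite I \<Longrightarrow> (\<And>i. i \<in> I \<Longrightarrow> finite (A i)) \<Longrightarrow> (\<And>i j. i \<in> I \<Longrightarrow> j \<in> I \<Longrightarrow> i \<noteq> j \<Longrightarrow> A i \<inter> A j = {})
   \<Longrightarrow> (\<Prod>i\<in>I. \<Prod>x\<in>A i. (\<phi> x :: real)) = (\<Prod>x\<in>(\<Union>i\<in>I. A i). \<phi> x)"
  by (subst prod.UNION_disjoint) auto

lemma idx_empty[simp]: "idx {} = 0" unfolding idx_def by simp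

context
  fixes X :: "'x set" and Y a Xs and Zs :: "'x \<Rightarrow> 'z set"
  assumes fX: "finite X" and YX: "Y \<subseteq> X" and aA: "a \<in> AA" and Xs: "Xs \<in> decomps n (X - Y)" and Zs: "Zs \<in> AS X"
    and nice: "\<forall>i\<in>{1..n}. le1 (Xs i)"
begin

lemma XsP: "Xs \<in> Pi\<^sub>E {1..n} (\<lambda>_. Pow (X - Y))" using Xs unfolding decomps_def by auto
lemma XsU: "(\<Union>i\<in>{1..n}. Xs i) = X - Y" using Xs unfolding decomps_def by auto
lemma XsD: "i \<in> {1..n} \<Longrightarrow> j \<in> {1..n} \<Longrightarrow> i \<noteq> j \<Longrightarrow> Xs i \<inter> Xs j = {}"
  using Xs unfolding decomps_def by auto
lemma Xs_sub: "i \<in> {1..n} \<Longrightarrow> Xs i \<subseteq> X - Y" using XsP by (auto simp: PiE_iff)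
lemma ZsP: "Zs \<in> Pi\<^sub>E X (\<lambda>_. Pow Z)" using Zs unfolding AS_def by auto
lemma ZsD: "x \<in> X \<Longrightarrow> y \<in> X \<Longrightarrow> x \<noteq> y \<Longrightarrow> Zs x \<inter> Zs y = {}" using Zs unfolding AS_def by auto
lemma Zs_sub: "x \<in> X \<Longrightarrow> Zs x \<subseteq> Z" using ZsP by (auto simp: PiE_iff)
lemma aP: "a \<in> Pi\<^sub>E {1..n} (\<lambda>i. {1..h i})" using aA unfolding AA_def glob_hyps_def by auto

lemma Xs_cases: "i \<in> {1..n} \<Longrightarrow> Xs i = {} \<or> (\<exists>x. Xs i = {x})"
  using nice unfolding le1_def by blast

lemma ZX_sub: "i \<in> {1..n} \<Longrightarrow> \<Union>(Zs ` Xs i) \<subseteq> Z"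
  using Xs_sub Zs_sub by blast

lemma Phia_old: "c \<in> {1..n} \<Longrightarrow> Phia X Y a Xs Zs c = a c + h c * idx (\<Union>(Zs ` Xs c))"
  unfolding Phia_def by simp

lemma Phia_new: "c \<in> {1..n'} \<Longrightarrow> \<not> c \<le> n \<Longrightarrow> Phia X Y a Xs Zs c =
   (if (\<exists>y\<in>Y. Zs y = S (c - n)) \<or> (\<exists>z. S (c - n) = {z} \<and> z \<notin> \<Union>(Zs ` X)) then 2 else 1)"
  unfolding Phia_def by auto

lemma PhiXs_old: "c \<in> {1..n} \<Longrightarrow> PhiXs Y Xs Zs c = Xs c"
  unfolding PhiXs_def by simp

lemma PhiXs_new: "c \<in> {1..n'} \<Longrightarrow> \<not> c \<le> n \<Longrightarrow> PhiXs Y Xs Zs c = {y \<in> Y. Zs y = S (c - n)}"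
  unfolding PhiXs_def by auto

lemma D_old: "c \<in> {1..n} \<Longrightarrow> D c (Phia X Y a Xs Zs c) = \<Union>(Zs ` Xs c)"
proof -
  assume c: "c \<in> {1..n}"
  have ac: "a c \<in> {1..h c}" using aP c by (auto simp: PiE_iff)
  show ?thesis unfolding Phia_old[OF c] D_def using c BJ_old[OF c ac] idx_S[OF ZX_sub[OF c]] by simp
qed

lemma D_new: "c \<in> {1..n'} \<Longrightarrow> \<not> c \<le> n \<Longrightarrow> D c (Phia X Y a Xs Zs c) =
   (if (\<exists>y\<in>Y. Zs y = S (c - n)) \<or> (\<exists>z. S (c - n) = {z} \<and> z \<notin> \<Union>(Zs ` X)) then S (c - n) else {})"
  unfolding Phia_new D_def by auto

lemma Phia_P: "Phia X Y a Xs Zs \<in> Pi\<^sub>E {1..n'} (\<lambda>c. {1..h' c})"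
proof (rule PiE_I)
  fix c assume c: "c \<in> {1..n'}"
  show "Phia X Y a Xs Zs c \<in> {1..h' c}"
  proof (cases "c \<le> n")
    case True
    then have c1: "c \<in> {1..n}" using c by auto
    have ac: "a c \<in> {1..h c}" using aP c1 by (auto simp: PiE_iff)
    have "idx (\<Union>(Zs ` Xs c)) \<le> NN" using idx_range ZX_sub c1 by blast
    then have m: "h c * idx (\<Union>(Zs ` Xs c)) \<le> h c * NN" by simp
    have e: "(NN + 1) * h c = h c + h c * NN" by (simp add: algebra_simps)
    show ?thesis unfolding Phia_old[OF c1] h'_old[OF c1] e atLeastAtMost_iff
      using ac m by (simp only: atLeastAtMost_iff) linarith
  next
    case False
    then show ?thesis unfolding Phia_new[OF c False] h'_new[OF c False] by auto
  qed
next
  fix c assume "c \<notin> {1..n'}"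
  then show "Phia X Y a Xs Zs c = undefined" unfolding Phia_def using n'_eq by auto
qed

lemma Phia_restrict: "restrict (\<lambda>c. Bf c (Phia X Y a Xs Zs c)) {1..n} = a"
proof
  fix c show "restrict (\<lambda>c. Bf c (Phia X Y a Xs Zs c)) {1..n} c = a c"
  proof (cases "c \<in> {1..n}")
    case True
    have ac: "a c \<in> {1..h c}" using aP True by (auto simp: PiE_iff)
    show ?thesis using BJ_old[OF True ac] True by (simp add: Phia_old[OF True])
  next
    case False
    then show ?thesis using PiE_arb[OF aP False] False by auto
  qed
qed


lemma Zs_ne_idx: "x \<in> X \<Longrightarrow> Zs x \<noteq> {} \<Longrightarrow> idx (Zs x) \<in> {1..NN} \<and> S (idx (Zs x)) = Zs x"
  using idx_pos idx_S Zs_sub by blast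

lemma PhiXs_disj: "c \<in> {1..n'} \<Longrightarrow> d \<in> {1..n'} \<Longrightarrow> c \<noteq> d \<Longrightarrow> PhiXs Y Xs Zs c \<inter> PhiXs Y Xs Zs d = {}"
proof -
  assume c: "c \<in> {1..n'}" and d: "d \<in> {1..n'}" and cd: "c \<noteq> d"
  show ?thesis
  proof (cases "c \<le> n"; cases "d \<le> n")
    assume "c \<le> n" "d \<le> n"
    then show ?thesis using c d cd XsD by (simp add: PhiXs_old)
  next
    assume "c \<le> n" "\<not> d \<le> n"
    then show ?thesis using c d Xs_sub[of c] by (auto simp: PhiXs_old PhiXs_new)
  next
    assume "\<not> c \<le> n" "d \<le> n"
    then show ?thesis using c d Xs_sub[of d] by (auto simp: PhiXs_old PhiXs_new)
  next
    assume nc: "\<not> c \<le> n" and nd: "\<not> d \<le> n"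
    show ?thesis
    proof (rule ccontr)
      assume "PhiXs Y Xs Zs c \<inter> PhiXs Y Xs Zs d \<noteq> {}"
      then obtain y where "y \<in> PhiXs Y Xs Zs c" "y \<in> PhiXs Y Xs Zs d" by blast
      then have "S (c - n) = S (d - n)" using c d nc nd by (auto simp: PhiXs_new)
      then have "c - n = d - n" using S_inj new_range[OF c nc] new_range[OF d nd] by auto
      then show False using cd nc nd by auto
    qed
  qed
qed

lemma PhiXs_sub: "c \<in> {1..n'} \<Longrightarrow> PhiXs Y Xs Zs c \<subseteq> X - PhiY Y Zs"
proof (cases "c \<le> n")
  case True
  assume c: "c \<in> {1..n'}"
  then show ?thesis using True Xs_sub[of c] by (auto simp: PhiXs_old PhiY_def)
next
  case False
  assume c: "c \<in> {1..n'}"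
  have "S (c - n) \<noteq> {}" using S_ne new_range[OF c False] by blast
  then show ?thesis using False c YX by (auto simp: PhiXs_new PhiY_def)
qed

lemma PhiXs_union: "(\<Union>c\<in>{1..n'}. PhiXs Y Xs Zs c) = X - PhiY Y Zs"
proof
  show "(\<Union>c\<in>{1..n'}. PhiXs Y Xs Zs c) \<subseteq> X - PhiY Y Zs" using PhiXs_sub by blast
  show "X - PhiY Y Zs \<subseteq> (\<Union>c\<in>{1..n'}. PhiXs Y Xs Zs c)"
  proof
    fix x assume x: "x \<in> X - PhiY Y Zs"
    show "x \<in> (\<Union>c\<in>{1..n'}. PhiXs Y Xs Zs c)"
    proof (cases "x \<in> Y")
      case False
      then have "x \<in> X - Y" using x by auto
      then obtain i where i: "i \<in> {1..n}" "x \<in> Xs i" using XsU by blast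
      have i': "i \<in> {1..n'}" using i n'_eq by auto
      have "x \<in> PhiXs Y Xs Zs i" using i PhiXs_old[OF i(1)] by simp
      then show ?thesis using i' by blast
    next
      case True
      then have ne: "Zs x \<noteq> {}" using x by (auto simp: PhiY_def)
      have xX: "x \<in> X" using x by auto
      define j where "j = idx (Zs x)"
      have j: "j \<in> {1..NN}" "S j = Zs x" using Zs_ne_idx[OF xX ne] unfolding j_def by auto
      have c: "n + j \<in> {1..n'}" "\<not> n + j \<le> n" using j n'_eq by auto
      show ?thesis using True j by (intro UN_I[OF c(1)]) (simp add: PhiXs_new[OF c])
    qed
  qed
qed

lemma PhiXs_P: "PhiXs Y Xs Zs \<in> Pi\<^sub>E {1..n'} (\<lambda>_. Pow (X - PhiY Y Zs))"
proof (rule PiE_I)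
  fix c assume "c \<in> {1..n'}" then show "PhiXs Y Xs Zs c \<in> Pow (X - PhiY Y Zs)" using PhiXs_sub by blast
next
  fix c assume "c \<notin> {1..n'}" then show "PhiXs Y Xs Zs c = undefined" unfolding PhiXs_def using n'_eq by auto
qed

lemma PhiXs_dec: "PhiXs Y Xs Zs \<in> decomps n' (X - PhiY Y Zs)"
  unfolding decomps_def using PhiXs_P PhiXs_union PhiXs_disj by blast

lemma PhiXs_le1: "c \<in> {1..n'} \<Longrightarrow> le1 (PhiXs Y Xs Zs c)"
proof (cases "c \<le> n")
  case True
  assume "c \<in> {1..n'}"
  then show ?thesis using True nice by (simp add: PhiXs_old)
next
  case False
  assume c: "c \<in> {1..n'}"
  have ne: "S (c - n) \<noteq> {}" using S_ne new_range[OF c False] by blast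
  show ?thesis unfolding le1_def PhiXs_new[OF c False]
  proof (intro ballI)
    fix x y assume x: "x \<in> {y \<in> Y. Zs y = S (c - n)}" and y: "y \<in> {y \<in> Y. Zs y = S (c - n)}"
    show "x = y"
    proof (rule ccontr)
      assume xy: "x \<noteq> y"
      have xX: "x \<in> X" and yX: "y \<in> X" using x y YX by auto
      have "Zs x \<inter> Zs y = {}" using ZsD[OF xX yX xy] .
      moreover have "Zs x = S (c - n)" "Zs y = S (c - n)" using x y by auto
      ultimately show False using ne by simp
    qed
  qed
qed

lemma in_D: "c \<in> {1..n'} \<Longrightarrow> z \<in> D c (Phia X Y a Xs Zs c) \<Longrightarrow>
   (\<exists>x\<in>PhiXs Y Xs Zs c. x \<in> X \<and> z \<in> Zs x) \<or> (\<not> c \<le> n \<and> S (c - n) = {z} \<and> z \<notin> \<Union>(Zs ` X))"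
proof (cases "c \<le> n")
  case True
  assume c: "c \<in> {1..n'}" and z: "z \<in> D c (Phia X Y a Xs Zs c)"
  have c1: "c \<in> {1..n}" using c True by auto
  show ?thesis using z Xs_sub[OF c1] unfolding D_old[OF c1] PhiXs_old[OF c1] by blast
next
  case False
  assume c: "c \<in> {1..n'}" and z: "z \<in> D c (Phia X Y a Xs Zs c)"
  show ?thesis using z YX unfolding D_new[OF c False] PhiXs_new[OF c False]
    by (auto split: if_splits)
qed

lemma D_union: "(\<Union>c\<in>{1..n'}. D c (Phia X Y a Xs Zs c)) = Z"
proof
  show "(\<Union>c\<in>{1..n'}. D c (Phia X Y a Xs Zs c)) \<subseteq> Z"
  proof (intro UN_least)
    fix c assume c: "c \<in> {1..n'}"
    show "D c (Phia X Y a Xs Zs c) \<subseteq> Z"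
    proof (cases "c \<le> n")
      case True then show ?thesis using c ZX_sub[of c] D_old[of c] by auto
    next
      case False then show ?thesis using c S_sub new_range[OF c False] D_new[OF c False] by auto
    qed
  qed
  show "Z \<subseteq> (\<Union>c\<in>{1..n'}. D c (Phia X Y a Xs Zs c))"
  proof
    fix z assume zZ: "z \<in> Z"
    show "z \<in> (\<Union>c\<in>{1..n'}. D c (Phia X Y a Xs Zs c))"
    proof (cases "\<exists>x\<in>X. z \<in> Zs x")
      case True
      then obtain x where x: "x \<in> X" "z \<in> Zs x" by blast
      show ?thesis
      proof (cases "x \<in> Y")
        case True
        define j where "j = idx (Zs x)"
        have j: "j \<in> {1..NN}" "S j = Zs x" using Zs_ne_idx[OF x(1)] x(2) unfolding j_def by auto
        have c: "n + j \<in> {1..n'}" "\<not> n + j \<le> n" using j n'_eq by auto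
        have "D (n + j) (Phia X Y a Xs Zs (n + j)) = Zs x"
          unfolding D_new[OF c] using True j by auto
        then show ?thesis using c x by blast
      next
        case False
        then have "x \<in> X - Y" using x by auto
        then obtain i where i: "i \<in> {1..n}" "x \<in> Xs i" using XsU by blast
        then have "z \<in> D i (Phia X Y a Xs Zs i)" using D_old[OF i(1)] x by auto
        then show ?thesis using i n'_eq by auto
      qed
    next
      case False
      define j where "j = idx {z}"
      have j: "j \<in> {1..NN}" "S j = {z}" using idx_pos[of "{z}"] idx_S[of "{z}"] zZ unfolding j_def by auto
      have c: "n + j \<in> {1..n'}" "\<not> n + j \<le> n" using j n'_eq by auto
      have "D (n + j) (Phia X Y a Xs Zs (n + j)) = {z}"
        unfolding D_new[OF c] using False j by auto
      then show ?thesis using c by blast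
    qed
  qed
qed

lemma D_disj: "disjfam {1..n'} (\<lambda>c. D c (Phia X Y a Xs Zs c))"
  unfolding disjfam_def
proof (intro ballI impI)
  fix c d assume c: "c \<in> {1..n'}" and d: "d \<in> {1..n'}" and cd: "c \<noteq> d"
  show "D c (Phia X Y a Xs Zs c) \<inter> D d (Phia X Y a Xs Zs d) = {}"
  proof (rule ccontr)
    assume "D c (Phia X Y a Xs Zs c) \<inter> D d (Phia X Y a Xs Zs d) \<noteq> {}"
    then obtain z where zc: "z \<in> D c (Phia X Y a Xs Zs c)" and zd: "z \<in> D d (Phia X Y a Xs Zs d)" by blast
    note Ac = in_D[OF c zc] and Ad = in_D[OF d zd]
    show False
    proof (cases "\<exists>x\<in>PhiXs Y Xs Zs c. x \<in> X \<and> z \<in> Zs x")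
      case True
      then obtain x where x: "x \<in> PhiXs Y Xs Zs c" "x \<in> X" "z \<in> Zs x" by blast
      show False
      proof (cases "\<exists>x\<in>PhiXs Y Xs Zs d. x \<in> X \<and> z \<in> Zs x")
        case True
        then obtain x' where x': "x' \<in> PhiXs Y Xs Zs d" "x' \<in> X" "z \<in> Zs x'" by blast
        have "x = x'" using ZsD[OF x(2) x'(2)] x(3) x'(3) by blast
        then show False using PhiXs_disj[OF c d cd] x x' by blast
      next
        case False then show False using Ad x by blast
      qed
    next
      case False
      then have A: "\<not> c \<le> n" "S (c - n) = {z}" "z \<notin> \<Union>(Zs ` X)" using Ac by auto
      then have B: "\<not> d \<le> n" "S (d - n) = {z}" using Ad by auto
      have "c - n = d - n" using S_inj new_range[OF c A(1)] new_range[OF d B(1)] A(2) B(2) by auto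
      then show False using A(1) B(1) cd by auto
    qed
  qed
qed

lemma Phia_AA': "Phia X Y a Xs Zs \<in> AA'"
  using glob_char[OF Phia_P] Phia_restrict aA D_union D_disj by simp

lemma Phi_IR: "Phi X (Y, a, Xs, Zs) \<in> IR X"
  unfolding Phi_def IR_def using Phia_AA' PhiXs_dec YX by (auto simp: PhiY_def)

lemma Phi_niceR: "niceR (Phi X (Y, a, Xs, Zs))"
  unfolding Phi_def niceR_def split
proof (intro ballI conjI impI)
  fix c assume c: "c \<in> {1..n'}"
  show "le1 (PhiXs Y Xs Zs c)" using PhiXs_le1[OF c] .
  {
    assume True: "c \<le> n" and J: "Jf c (Phia X Y a Xs Zs c) \<noteq> 0"
    have c1: "c \<in> {1..n}" using c True by auto
    have ac: "a c \<in> {1..h c}" using aP c1 by (auto simp: PiE_iff)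
    have "idx (\<Union>(Zs ` Xs c)) \<noteq> 0" using J BJ_old[OF c1 ac] Phia_old[OF c1] by simp
    then have "Xs c \<noteq> {}" unfolding idx_def by auto
    then show "PhiXs Y Xs Zs c \<noteq> {}" using PhiXs_old[OF c1] by simp
  }
  {
    assume nc: "\<not> c \<le> n" and a1: "Phia X Y a Xs Zs c = 1"
    then show "PhiXs Y Xs Zs c = {}" unfolding Phia_new[OF c nc] PhiXs_new[OF c nc]
      by (auto split: if_splits)
  }
  {
    assume nc: "\<not> c \<le> n" and a2: "Phia X Y a Xs Zs c = 2" and e: "PhiXs Y Xs Zs c = {}"
    then show "card (S (c - n)) = 1" unfolding Phia_new[OF c nc] PhiXs_new[OF c nc]
      by (auto split: if_splits)
  }
qed


lemma D_owner: "c \<in> {1..n'} \<Longrightarrow> x \<in> PhiXs Y Xs Zs c \<Longrightarrow> D c (Phia X Y a Xs Zs c) = Zs x"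
proof (cases "c \<le> n")
  case True
  assume c: "c \<in> {1..n'}" and x: "x \<in> PhiXs Y Xs Zs c"
  have c1: "c \<in> {1..n}" using c True by auto
  have "Xs c = {x}" using x Xs_cases[OF c1] PhiXs_old[OF c1] by auto
  then show ?thesis using D_old[OF c1] by simp
next
  case False
  assume c: "c \<in> {1..n'}" and x: "x \<in> PhiXs Y Xs Zs c"
  have "x \<in> Y" "Zs x = S (c - n)" using x PhiXs_new[OF c False] by auto
  then show ?thesis unfolding D_new[OF c False] by auto
qed

lemma Psi_Phi: "Psi X (Phi X (Y, a, Xs, Zs)) = (Y, a, Xs, Zs)"
proof -
  have 1: "PsiY (PhiY Y Zs) (PhiXs Y Xs Zs) = Y"
  proof
    show "PsiY (PhiY Y Zs) (PhiXs Y Xs Zs) \<subseteq> Y"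
      unfolding PsiY_def PhiY_def using PhiXs_new n'_eq by auto
    show "Y \<subseteq> PsiY (PhiY Y Zs) (PhiXs Y Xs Zs)"
    proof
      fix y assume y: "y \<in> Y"
      show "y \<in> PsiY (PhiY Y Zs) (PhiXs Y Xs Zs)"
      proof (cases "Zs y = {}")
        case True then show ?thesis using y unfolding PsiY_def PhiY_def by auto
      next
        case False
        have yX: "y \<in> X" using y YX by auto
        define j where "j = idx (Zs y)"
        have j: "j \<in> {1..NN}" "S j = Zs y" using Zs_ne_idx[OF yX False] unfolding j_def by auto
        have c: "n + j \<in> {1..n'}" "\<not> n + j \<le> n" using j n'_eq by auto
        have "y \<in> PhiXs Y Xs Zs (n + j)" using y j by (simp add: PhiXs_new[OF c])
        moreover have "n + j \<in> {n+1..n'}" using c by auto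
        ultimately show ?thesis unfolding PsiY_def by blast
      qed
    qed
  qed
  have 2: "Psia (Phia X Y a Xs Zs) = a" unfolding Psia_def using Phia_restrict .
  have 3: "PsiXs (PhiXs Y Xs Zs) = Xs"
  proof
    fix c show "PsiXs (PhiXs Y Xs Zs) c = Xs c"
    proof (cases "c \<in> {1..n}")
      case True then show ?thesis unfolding PsiXs_def using PhiXs_old[OF True] by simp
    next
      case False then show ?thesis unfolding PsiXs_def using PiE_arb[OF XsP False] False by auto
    qed
  qed
  have 4: "PsiZs X (Phia X Y a Xs Zs) (PhiXs Y Xs Zs) = Zs"
  proof
    fix x show "PsiZs X (Phia X Y a Xs Zs) (PhiXs Y Xs Zs) x = Zs x"
    proof (cases "x \<in> X")
      case False then show ?thesis unfolding PsiZs_def using PiE_arb[OF ZsP False] by simp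
    next
      case xX: True
      show ?thesis
      proof (cases "x \<in> PhiY Y Zs")
        case True
        then have "{c \<in> {1..n'}. x \<in> PhiXs Y Xs Zs c} = {}" using PhiXs_sub by blast
        moreover have "Zs x = {}" using True by (simp add: PhiY_def)
        ultimately show ?thesis unfolding PsiZs_def using xX by (simp only: restrict_apply' UN_empty)
      next
        case False
        then have "x \<in> (\<Union>c\<in>{1..n'}. PhiXs Y Xs Zs c)" using PhiXs_union xX by blast
        then obtain c0 where c0: "c0 \<in> {1..n'}" "x \<in> PhiXs Y Xs Zs c0" by blast
        have "{c \<in> {1..n'}. x \<in> PhiXs Y Xs Zs c} = {c0}"
          using c0 PhiXs_disj by blast
        then show ?thesis unfolding PsiZs_def using xX D_owner[OF c0] by simp
      qed
    qed
  qed
  show ?thesis unfolding Psi_def Phi_def using 1 2 3 4 by simp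
qed


lemma T1: "TR (Phi X (Y, a, Xs, Zs)) = TL X (Y, a, Xs, Zs)"
proof -
  define Y' where "Y' = PhiY Y Zs"
  define a' where "a' = Phia X Y a Xs Zs"
  define Xs' where "Xs' = PhiXs Y Xs Zs"
  define Cl where "Cl = Z - \<Union>(Zs ` X)"
  define ClC where "ClC c = {z \<in> Cl. S (c - n) = {z}}" for c
  define Q where "Q c = w' c (a' c) * bern_dens (r' c (a' c)) (f' c (a' c)) (Xs' c)" for c
  define G where "G x = g (Zs x) x" for x
  have fY: "finite Y" using fX YX finite_subset by blast
  have Y'Y: "Y' \<subseteq> Y" unfolding Y'_def PhiY_def by auto
  have fY': "finite Y'" using fY Y'Y finite_subset by blast
  have fCl: "finite Cl" unfolding Cl_def using finZ by simp
  have split1: "{1..n'} = {1..n} \<union> {n+1..n'}" using n'_eq by auto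
  have dis1: "{1..n} \<inter> {n+1..n'} = {}" by auto
  have newc: "c \<in> {1..n'}" "\<not> c \<le> n" if "c \<in> {n+1..n'}" for c using that by auto
  have AB: "(\<Prod>c\<in>{1..n'}. w' c (a' c)) * (\<Prod>c\<in>{1..n'}. bern_dens (r' c (a' c)) (f' c (a' c)) (Xs' c))
      = (\<Prod>c\<in>{1..n}. Q c) * (\<Prod>c\<in>{n+1..n'}. Q c)"
    unfolding Q_def prod.distrib[symmetric] split1 by (rule prod.union_disjoint) auto
  have C1: "Q c = w c (a c) * bern_dens (r c (a c)) (f c (a c)) (Xs c) * (\<Prod>x\<in>Xs c. G x)"
    if c: "c \<in> {1..n}" for c
  proof -
    have ac: "a c \<in> {1..h c}" using aP c by (auto simp: PiE_iff)
    have X'c: "Xs' c = Xs c" unfolding Xs'_def using PhiXs_old[OF c] .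
    have a'c: "a' c = a c + h c * idx (\<Union>(Zs ` Xs c))" unfolding a'_def using Phia_old[OF c] .
    show ?thesis
    proof (cases "Xs c = {}")
      case True
      then show ?thesis unfolding Q_def X'c a'c using Q_old_empty[OF c ac] by simp
    next
      case False
      then obtain x where x: "Xs c = {x}" using Xs_cases[OF c] by blast
      have xX: "x \<in> X" using x Xs_sub[OF c] by auto
      have j: "idx (Zs x) \<le> NN" "S (idx (Zs x)) = Zs x" using idx_range idx_S Zs_sub[OF xX] by auto
      have "Q c = w c (a c) * bern_dens (r c (a c)) (f c (a c)) {x} * g (S (idx (Zs x))) x"
        unfolding Q_def X'c a'c x using Q_old[OF c ac j(1)] by simp
      then show ?thesis using x j(2) by (simp add: G_def)
    qed
  qed
  have C: "(\<Prod>c\<in>{1..n}. Q c) = (\<Prod>c\<in>{1..n}. w c (a c)) * (\<Prod>c\<in>{1..n}. bern_dens (r c (a c)) (f c (a c)) (Xs c))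
      * (\<Prod>x\<in>X - Y. G x)"
  proof -
    have "(\<Prod>c\<in>{1..n}. Q c) = (\<Prod>c\<in>{1..n}. w c (a c) * bern_dens (r c (a c)) (f c (a c)) (Xs c) * (\<Prod>x\<in>Xs c. G x))"
      using C1 by (rule prod.cong[OF refl])
    also have "\<dots> = (\<Prod>c\<in>{1..n}. w c (a c)) * (\<Prod>c\<in>{1..n}. bern_dens (r c (a c)) (f c (a c)) (Xs c))
      * (\<Prod>c\<in>{1..n}. \<Prod>x\<in>Xs c. G x)" by (simp add: prod.distrib)
    also have "(\<Prod>c\<in>{1..n}. \<Prod>x\<in>Xs c. G x) = (\<Prod>x\<in>(\<Union>c\<in>{1..n}. Xs c). G x)"
    proof (rule prod_UN_disj)
      fix c assume c: "c \<in> {1..n}"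
      show "finite (Xs c)" using Xs_sub[OF c] fX by (meson Diff_subset finite_subset subset_trans)
    next
      fix c d assume "c \<in> {1..n}" "d \<in> {1..n}" "c \<noteq> d"
      then show "Xs c \<inter> Xs d = {}" using XsD by blast
    qed simp
    finally show ?thesis unfolding XsU .
  qed
  have D1: "Q c = (\<Prod>y\<in>Xs' c. G y * lam y) * (\<Prod>z\<in>ClC c. lamC z)" if cc: "c \<in> {n+1..n'}" for c
  proof -
    note c = newc[OF cc]
    have X'c: "Xs' c = {y \<in> Y. Zs y = S (c - n)}" unfolding Xs'_def using PhiXs_new[OF c] .
    have a'c: "a' c = (if (\<exists>y\<in>Y. Zs y = S (c - n)) \<or> (\<exists>z. S (c - n) = {z} \<and> z \<notin> \<Union>(Zs ` X)) then 2 else 1)"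
      unfolding a'_def using Phia_new[OF c] .
    have l1: "le1 (Xs' c)" unfolding Xs'_def using PhiXs_le1 c by simp
    show ?thesis
    proof (cases "Xs' c = {}")
      case False
      then obtain y where y: "Xs' c = {y}" using le1_cases[OF l1] by blast
      then have yY: "y \<in> Y" "Zs y = S (c - n)" using X'c by auto
      have a2: "a' c = 2" using a'c yY by auto
      have "ClC c = {}"
      proof (rule ccontr)
        assume "ClC c \<noteq> {}"
        then obtain z where "z \<in> Cl" "S (c - n) = {z}" unfolding ClC_def by auto
        then show False using yY YX unfolding Cl_def by auto
      qed
      then show ?thesis unfolding Q_def a2 y using Q_new2[OF c] yY by (simp add: G_def)
    next
      case True
      then have noy: "\<not> (\<exists>y\<in>Y. Zs y = S (c - n))" using X'c by auto
      show ?thesis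
      proof (cases "\<exists>z. S (c - n) = {z} \<and> z \<notin> \<Union>(Zs ` X)")
        case True
        then obtain z where z: "S (c - n) = {z}" "z \<notin> \<Union>(Zs ` X)" by blast
        have "z \<in> Z" using S_sub[of "c - n"] new_range[OF c] z by auto
        then have Cz: "ClC c = {z}" unfolding ClC_def Cl_def using z by auto
        have a2: "a' c = 2" using a'c True by auto
        show ?thesis unfolding Q_def a2 Cz \<open>Xs' c = {}\<close> using Q_new3[OF c z(1)] by simp
      next
        case False
        have a1: "a' c = 1" using a'c False noy by auto
        have Cz: "ClC c = {}" unfolding ClC_def Cl_def using False by auto
        show ?thesis unfolding Q_def a1 Cz \<open>Xs' c = {}\<close> using Q_new1[OF c] by simp
      qed
    qed
  qed
  have newU: "(\<Union>c\<in>{n+1..n'}. Xs' c) = Y - Y'"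
  proof
    show "(\<Union>c\<in>{n+1..n'}. Xs' c) \<subseteq> Y - Y'"
    proof (rule UN_least)
      fix c assume cc: "c \<in> {n+1..n'}"
      note c = newc[OF cc]
      have "Xs' c \<subseteq> X - Y'" unfolding Xs'_def Y'_def using PhiXs_sub[OF c(1)] .
      moreover have "Xs' c \<subseteq> Y" unfolding Xs'_def using PhiXs_new[OF c] by auto
      ultimately show "Xs' c \<subseteq> Y - Y'" by blast
    qed
    show "Y - Y' \<subseteq> (\<Union>c\<in>{n+1..n'}. Xs' c)"
    proof
      fix y assume y: "y \<in> Y - Y'"
      then have "y \<in> X - Y'" using YX by blast
      then have "y \<in> (\<Union>c\<in>{1..n'}. Xs' c)" using PhiXs_union unfolding Xs'_def Y'_def by simp
      then obtain c where c: "c \<in> {1..n'}" "y \<in> Xs' c" by blast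
      have "\<not> c \<le> n"
      proof
        assume "c \<le> n"
        then have c1: "c \<in> {1..n}" using c by auto
        then have "y \<in> Xs c" using c PhiXs_old[OF c1] unfolding Xs'_def by simp
        then show False using Xs_sub[OF c1] y by blast
      qed
      then have "c \<in> {n+1..n'}" using c by auto
      then show "y \<in> (\<Union>c\<in>{n+1..n'}. Xs' c)" using c by blast
    qed
  qed
  have ClU: "(\<Union>c\<in>{n+1..n'}. ClC c) = Cl"
  proof
    show "(\<Union>c\<in>{n+1..n'}. ClC c) \<subseteq> Cl" unfolding ClC_def by auto
    show "Cl \<subseteq> (\<Union>c\<in>{n+1..n'}. ClC c)"
    proof
      fix z assume z: "z \<in> Cl"
      define j where "j = idx {z}"
      have j: "j \<in> {1..NN}" "S j = {z}" using idx_pos[of "{z}"] idx_S[of "{z}"] z unfolding j_def Cl_def by auto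
      have "n + j \<in> {n+1..n'}" using j n'_eq by auto
      moreover have "z \<in> ClC (n + j)" unfolding ClC_def using z j by simp
      ultimately show "z \<in> (\<Union>c\<in>{n+1..n'}. ClC c)" by blast
    qed
  qed
  have D: "(\<Prod>c\<in>{n+1..n'}. Q c) = (\<Prod>y\<in>Y - Y'. G y * lam y) * (\<Prod>z\<in>Cl. lamC z)"
  proof -
    have "(\<Prod>c\<in>{n+1..n'}. Q c) = (\<Prod>c\<in>{n+1..n'}. (\<Prod>y\<in>Xs' c. G y * lam y) * (\<Prod>z\<in>ClC c. lamC z))"
      using D1 by (rule prod.cong[OF refl])
    also have "\<dots> = (\<Prod>c\<in>{n+1..n'}. \<Prod>y\<in>Xs' c. G y * lam y) * (\<Prod>c\<in>{n+1..n'}. \<Prod>z\<in>ClC c. lamC z)"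
      by (simp add: prod.distrib)
    also have "(\<Prod>c\<in>{n+1..n'}. \<Prod>y\<in>Xs' c. G y * lam y) = (\<Prod>y\<in>(\<Union>c\<in>{n+1..n'}. Xs' c). G y * lam y)"
    proof (rule prod_UN_disj)
      fix c assume "c \<in> {n+1..n'}"
      then show "finite (Xs' c)" unfolding Xs'_def using PhiXs_sub[of c] fX finite_subset by (metis Diff_subset newc(1) order_trans)
    next
      fix c d assume "c \<in> {n+1..n'}" "d \<in> {n+1..n'}" "c \<noteq> d"
      then show "Xs' c \<inter> Xs' d = {}" unfolding Xs'_def using PhiXs_disj newc by blast
    qed simp
    also have "(\<Prod>c\<in>{n+1..n'}. \<Prod>z\<in>ClC c. lamC z) = (\<Prod>z\<in>(\<Union>c\<in>{n+1..n'}. ClC c). lamC z)"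
    proof (rule prod_UN_disj)
      fix c assume "c \<in> {n+1..n'}"
      then show "finite (ClC c)" unfolding ClC_def using fCl by simp
    next
      fix c d assume cd: "c \<in> {n+1..n'}" "d \<in> {n+1..n'}" "c \<noteq> d"
      show "ClC c \<inter> ClC d = {}"
      proof (rule ccontr)
        assume "ClC c \<inter> ClC d \<noteq> {}"
        then obtain z where "S (c - n) = {z}" "S (d - n) = {z}" unfolding ClC_def by auto
        then have "c - n = d - n" using S_inj new_range[OF newc[OF cd(1)]] new_range[OF newc[OF cd(2)]] by auto
        then show False using cd by auto
      qed
    qed simp
    finally show ?thesis unfolding newU ClU .
  qed
  have lam'Y': "(\<Prod>y\<in>Y'. lam' y) = (\<Prod>y\<in>Y'. G y) * (\<Prod>y\<in>Y'. lam y)"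
  proof -
    have "(\<Prod>y\<in>Y'. lam' y) = (\<Prod>y\<in>Y'. G y * lam y)"
      by (rule prod.cong[OF refl]) (simp add: upd_lam G_def Y'_def PhiY_def)
    then show ?thesis by (simp add: prod.distrib)
  qed
  have E1: "(\<Prod>y\<in>Y. lam y) = (\<Prod>y\<in>Y - Y'. lam y) * (\<Prod>y\<in>Y'. lam y)"
    using prod.subset_diff[OF Y'Y fY] .
  have E2: "(\<Prod>x\<in>X. G x) = (\<Prod>x\<in>X - Y. G x) * (\<Prod>x\<in>Y - Y'. G x) * (\<Prod>x\<in>Y'. G x)"
    using prod.subset_diff[OF YX fX, of G] prod.subset_diff[OF Y'Y fY, of G] by (simp add: mult.assoc)
  have E3: "(\<Prod>y\<in>Y - Y'. G y * lam y) = (\<Prod>y\<in>Y - Y'. G y) * (\<Prod>y\<in>Y - Y'. lam y)"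
    by (simp add: prod.distrib)
  have "TR (Phi X (Y, a, Xs, Zs)) = (\<Prod>y\<in>Y'. lam' y) * ((\<Prod>c\<in>{1..n'}. w' c (a' c)) *
      (\<Prod>c\<in>{1..n'}. bern_dens (r' c (a' c)) (f' c (a' c)) (Xs' c)))"
    unfolding TR_def Phi_def Y'_def a'_def Xs'_def by (simp add: mult.assoc)
  also have "\<dots> = TL X (Y, a, Xs, Zs)"
    unfolding AB C D lam'Y' TL_def split E1 G_def[symmetric] E2 E3 Cl_def[symmetric]
    by (simp add: ac_simps)
  finally show ?thesis .
qed

end

lemma Z1: "finite X \<Longrightarrow> p \<in> IL X \<Longrightarrow> \<not> niceL p \<Longrightarrow> TL X p = 0"
proof -
  assume fX: "finite X" and p: "p \<in> IL X" and nn: "\<not> niceL p"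
  obtain Y a Xs Zs where pe: "p = (Y, a, Xs, Zs)" by (cases p) auto
  have Xs: "Xs \<in> decomps n (X - Y)" using p pe unfolding IL_def by auto
  obtain i where i: "i \<in> {1..n}" "\<not> le1 (Xs i)" using nn pe unfolding niceL_def by auto
  have "Xs i \<subseteq> X" using Xs i unfolding decomps_def by (auto simp: PiE_iff)
  then have "finite (Xs i)" using fX finite_subset by blast
  then have "bern_dens (r i (a i)) (f i (a i)) (Xs i) = 0" using bern_big i by blast
  then have "(\<Prod>i\<in>{1..n}. bern_dens (r i (a i)) (f i (a i)) (Xs i)) = 0"
    using i by (intro prod_zero) auto
  then show ?thesis unfolding pe TL_def by simp
qed

lemma Z2: "finite X \<Longrightarrow> q \<in> IR X \<Longrightarrow> \<not> niceR q \<Longrightarrow> TR q = 0"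
proof -
  assume fX: "finite X" and q: "q \<in> IR X" and nn: "\<not> niceR q"
  obtain Y a Xs where qe: "q = (Y, a, Xs)" by (cases q) auto
  have Xs: "Xs \<in> decomps n' (X - Y)" and aA: "a \<in> AA'" using q qe unfolding IR_def by auto
  have aP: "a \<in> Pi\<^sub>E {1..n'} (\<lambda>c. {1..h' c})" using aA unfolding AA'_def glob_hyps_def by auto
  obtain c where c: "c \<in> {1..n'}" and viol: "\<not> (le1 (Xs c) \<and>
     (c \<le> n \<longrightarrow> Jf c (a c) \<noteq> 0 \<longrightarrow> Xs c \<noteq> {}) \<and>
     (\<not> c \<le> n \<longrightarrow> (a c = 1 \<longrightarrow> Xs c = {}) \<and> (a c = 2 \<longrightarrow> Xs c = {} \<longrightarrow> card (S (c - n)) = 1)))"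
    using nn unfolding qe niceR_def prod.case by blast
  have ac: "a c \<in> {1..h' c}" using aP c by (auto simp: PiE_iff)
  have "Xs c \<subseteq> X" using Xs c unfolding decomps_def by (auto simp: PiE_iff)
  then have fXc: "finite (Xs c)" using fX finite_subset by blast
  have "bern_dens (r' c (a c)) (f' c (a c)) (Xs c) = 0"
  proof (cases "le1 (Xs c)")
    case False then show ?thesis using bern_big fXc by blast
  next
    case l1: True
    show ?thesis
    proof (cases "c \<le> n")
      case True
      then have c1: "c \<in> {1..n}" using c by auto
      have J: "Jf c (a c) \<noteq> 0" "Xs c = {}" using viol l1 True by auto
      note R = repr_old[OF c1 ac]
      have "Jf c (a c) \<in> {1..NN}" using J R by auto
      then have "bern_dens (r' c (Bf c (a c) + h c * Jf c (a c))) (f' c (a c)) {} = 0"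
        using Z_det[OF c1] R by blast
      then show ?thesis using R J by simp
    next
      case False
      have a12: "a c = 1 \<or> a c = 2" using ac h'_new[OF c False] by auto
      show ?thesis
      proof (cases "a c = 1")
        case True
        then have "Xs c \<noteq> {}" using viol l1 False by auto
        then show ?thesis using Z_new1[OF c False fXc] True by simp
      next
        case a2: False
        then have "a c = 2" using a12 by simp
        then have "Xs c = {}" "card (S (c - n)) \<noteq> 1" using viol l1 False by auto
        then show ?thesis using Z_new2[OF c False] \<open>a c = 2\<close> by simp
      qed
    qed
  qed
  then have "(\<Prod>c\<in>{1..n'}. bern_dens (r' c (a c)) (f' c (a c)) (Xs c)) = 0"
    using c by (intro prod_zero) auto
  then show ?thesis unfolding qe TR_def by simp
qed

context
  fixes X :: "'x set" and Y' a' Xs'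
  assumes fX: "finite X" and Y'X: "Y' \<subseteq> X" and a'A: "a' \<in> AA'" and Xs': "Xs' \<in> decomps n' (X - Y')"
    and niceq: "niceR (Y', a', Xs')"
begin

lemma a'P: "a' \<in> Pi\<^sub>E {1..n'} (\<lambda>c. {1..h' c})" using a'A unfolding AA'_def glob_hyps_def by auto
lemma GC: "Psia a' \<in> AA" "(\<Union>c\<in>{1..n'}. D c (a' c)) = Z" "disjfam {1..n'} (\<lambda>c. D c (a' c))"
  using glob_char[OF a'P] a'A unfolding Psia_def by auto
lemma DD: "c \<in> {1..n'} \<Longrightarrow> d \<in> {1..n'} \<Longrightarrow> c \<noteq> d \<Longrightarrow> D c (a' c) \<inter> D d (a' d) = {}"
  using GC(3) unfolding disjfam_def by blast
lemma D_subZ: "c \<in> {1..n'} \<Longrightarrow> D c (a' c) \<subseteq> Z" using GC(2) by blast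
lemma Xs'P: "Xs' \<in> Pi\<^sub>E {1..n'} (\<lambda>_. Pow (X - Y'))" using Xs' unfolding decomps_def by auto
lemma Xs'U: "(\<Union>c\<in>{1..n'}. Xs' c) = X - Y'" using Xs' unfolding decomps_def by auto
lemma Xs'D: "c \<in> {1..n'} \<Longrightarrow> d \<in> {1..n'} \<Longrightarrow> c \<noteq> d \<Longrightarrow> Xs' c \<inter> Xs' d = {}"
  using Xs' unfolding decomps_def by auto
lemma Xs'_sub: "c \<in> {1..n'} \<Longrightarrow> Xs' c \<subseteq> X - Y'" using Xs'P by (auto simp: PiE_iff)
lemma ac': "c \<in> {1..n'} \<Longrightarrow> a' c \<in> {1..h' c}" using a'P by (auto simp: PiE_iff)
lemma nq: "c \<in> {1..n'} \<Longrightarrow> le1 (Xs' c) \<and>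
     (c \<le> n \<longrightarrow> Jf c (a' c) \<noteq> 0 \<longrightarrow> Xs' c \<noteq> {}) \<and>
     (\<not> c \<le> n \<longrightarrow> (a' c = 1 \<longrightarrow> Xs' c = {}) \<and> (a' c = 2 \<longrightarrow> Xs' c = {} \<longrightarrow> card (S (c - n)) = 1))"
  using niceq unfolding niceR_def by auto

lemma new12: "c \<in> {1..n'} \<Longrightarrow> \<not> c \<le> n \<Longrightarrow> a' c = 1 \<or> a' c = 2"
  using ac' h'_new by fastforce

lemma D_new_ne: "c \<in> {1..n'} \<Longrightarrow> \<not> c \<le> n \<Longrightarrow> Xs' c \<noteq> {} \<Longrightarrow> a' c = 2 \<and> D c (a' c) = S (c - n)"
proof -
  assume c: "c \<in> {1..n'}" "\<not> c \<le> n" and ne: "Xs' c \<noteq> {}"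
  have "a' c \<noteq> 1" using nq[OF c(1)] c ne by auto
  then have "a' c = 2" using new12[OF c] by auto
  then show ?thesis unfolding D_def using c by simp
qed

lemma D_old': "c \<in> {1..n} \<Longrightarrow> D c (a' c) = S (Jf c (a' c))"
  unfolding D_def by simp

lemma owner_unique: "c \<in> {1..n'} \<Longrightarrow> x \<in> Xs' c \<Longrightarrow> {d \<in> {1..n'}. x \<in> Xs' d} = {c}"
  using Xs'D by blast

lemma Zs_owner: "c \<in> {1..n'} \<Longrightarrow> x \<in> Xs' c \<Longrightarrow> PsiZs X a' Xs' x = D c (a' c)"
proof -
  assume c: "c \<in> {1..n'}" and x: "x \<in> Xs' c"
  have xX: "x \<in> X" using Xs'_sub[OF c] x by auto
  show ?thesis unfolding PsiZs_def using owner_unique[OF c x] xX by simp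
qed

lemma Zs_Y': "x \<in> Y' \<Longrightarrow> PsiZs X a' Xs' x = {}"
proof -
  assume x: "x \<in> Y'"
  have E: "{d \<in> {1..n'}. x \<in> Xs' d} = {}" using Xs'_sub x by blast
  have xX: "x \<in> X" using x Y'X by auto
  show ?thesis unfolding PsiZs_def restrict_apply'[OF xX] E by simp
qed

lemma newXs_sub: "c \<in> {1..n'} \<Longrightarrow> \<not> c \<le> n \<Longrightarrow> Xs' c \<subseteq> PsiY Y' Xs'"
  unfolding PsiY_def by auto

lemma oldXs_sub: "c \<in> {1..n} \<Longrightarrow> Xs' c \<subseteq> X - PsiY Y' Xs'"
proof -
  assume c: "c \<in> {1..n}"
  have c': "c \<in> {1..n'}" using c n'_eq by auto
  have "Xs' c \<inter> Xs' d = {}" if "d \<in> {n+1..n'}" for d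
    using Xs'D[OF c'] that c by auto
  then show ?thesis using Xs'_sub[OF c'] unfolding PsiY_def by blast
qed

lemma PsiY_sub: "PsiY Y' Xs' \<subseteq> X"
proof -
  have "Xs' c \<subseteq> X" if "c \<in> {n+1..n'}" for c using Xs'_sub[of c] that by auto
  then show ?thesis unfolding PsiY_def using Y'X by blast
qed

lemma PsiXs_dec: "PsiXs Xs' \<in> decomps n (X - PsiY Y' Xs')"
  unfolding decomps_def
proof (intro CollectI conjI)
  show "PsiXs Xs' \<in> Pi\<^sub>E {1..n} (\<lambda>_. Pow (X - PsiY Y' Xs'))"
    unfolding PsiXs_def using oldXs_sub by auto
  show "(\<Union>i\<in>{1..n}. PsiXs Xs' i) = X - PsiY Y' Xs'"
  proof
    show "(\<Union>i\<in>{1..n}. PsiXs Xs' i) \<subseteq> X - PsiY Y' Xs'"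
    proof (rule UN_least)
      fix i assume i: "i \<in> {1..n}"
      show "PsiXs Xs' i \<subseteq> X - PsiY Y' Xs'" unfolding PsiXs_def using oldXs_sub[OF i] i by simp
    qed
    show "X - PsiY Y' Xs' \<subseteq> (\<Union>i\<in>{1..n}. PsiXs Xs' i)"
    proof
      fix x assume x: "x \<in> X - PsiY Y' Xs'"
      then have "x \<in> X - Y'" unfolding PsiY_def by auto
      then obtain c where c: "c \<in> {1..n'}" "x \<in> Xs' c" using Xs'U by blast
      have "c \<le> n"
      proof (rule ccontr)
        assume "\<not> c \<le> n"
        then show False using newXs_sub[OF c(1)] c(2) x by blast
      qed
      then have "c \<in> {1..n}" using c by auto
      then show "x \<in> (\<Union>i\<in>{1..n}. PsiXs Xs' i)" unfolding PsiXs_def using c by auto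
    qed
  qed
  show "\<forall>i\<in>{1..n}. \<forall>j\<in>{1..n}. i \<noteq> j \<longrightarrow> PsiXs Xs' i \<inter> PsiXs Xs' j = {}"
    unfolding PsiXs_def using Xs'D n'_eq by auto
qed

lemma PsiZs_AS: "PsiZs X a' Xs' \<in> AS X"
  unfolding AS_def
proof (intro CollectI conjI ballI impI)
  show "PsiZs X a' Xs' \<in> Pi\<^sub>E X (\<lambda>_. Pow Z)"
    unfolding PsiZs_def using D_subZ by auto
next
  fix x y assume x: "x \<in> X" and y: "y \<in> X" and xy: "x \<noteq> y"
  show "PsiZs X a' Xs' x \<inter> PsiZs X a' Xs' y = {}"
  proof (cases "x \<in> Y' \<or> y \<in> Y'")
    case True then show ?thesis using Zs_Y' by auto
  next
    case False
    then have "x \<in> X - Y'" "y \<in> X - Y'" using x y by auto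
    then obtain c d where c: "c \<in> {1..n'}" "x \<in> Xs' c" and d: "d \<in> {1..n'}" "y \<in> Xs' d"
      using Xs'U by blast
    have "c \<noteq> d" using nq[OF c(1)] c d xy unfolding le1_def by blast
    then show ?thesis using Zs_owner[OF c] Zs_owner[OF d] DD[OF c(1) d(1)] by simp
  qed
qed

lemma Psi_IL: "Psi X (Y', a', Xs') \<in> IL X"
  unfolding Psi_def IL_def using PsiY_sub GC(1) PsiXs_dec PsiZs_AS by auto

lemma Psi_niceL: "niceL (Psi X (Y', a', Xs'))"
  unfolding Psi_def niceL_def PsiXs_def using nq n'_eq by auto


lemma newD_eq: "c \<in> {1..n'} \<Longrightarrow> \<not> c \<le> n \<Longrightarrow> y \<in> PsiY Y' Xs' \<Longrightarrow> PsiZs X a' Xs' y = S (c - n) \<Longrightarrow> y \<in> Xs' c"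
proof -
  assume c: "c \<in> {1..n'}" "\<not> c \<le> n" and y: "y \<in> PsiY Y' Xs'" and e: "PsiZs X a' Xs' y = S (c - n)"
  have ne: "S (c - n) \<noteq> {}" using S_ne new_range[OF c] by blast
  have "y \<notin> Y'" using Zs_Y' e ne by auto
  then obtain d where d: "d \<in> {n+1..n'}" "y \<in> Xs' d" using y unfolding PsiY_def by blast
  have d': "d \<in> {1..n'}" "\<not> d \<le> n" using d by auto
  have "PsiZs X a' Xs' y = S (d - n)" using Zs_owner[OF d'(1) d(2)] D_new_ne[OF d'] d(2) by auto
  then have "S (c - n) = S (d - n)" using e by simp
  then have "c - n = d - n" using S_inj new_range[OF c] new_range[OF d'] by auto
  then have "c = d" using c d' by auto
  then show ?thesis using d by simp
qed

lemma Phi_Psi: "Phi X (Psi X (Y', a', Xs')) = (Y', a', Xs')"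
proof -
  define Y where "Y = PsiY Y' Xs'"
  define a where "a = Psia a'"
  define Xs where "Xs = PsiXs Xs'"
  define Zs where "Zs = PsiZs X a' Xs'"
  have 1: "PhiY Y Zs = Y'"
  proof
    show "Y' \<subseteq> PhiY Y Zs" unfolding PhiY_def Y_def Zs_def PsiY_def using Zs_Y' by auto
    show "PhiY Y Zs \<subseteq> Y'"
    proof
      fix y assume y: "y \<in> PhiY Y Zs"
      show "y \<in> Y'"
      proof (rule ccontr)
        assume "y \<notin> Y'"
        then obtain d where d: "d \<in> {n+1..n'}" "y \<in> Xs' d" using y unfolding PhiY_def Y_def PsiY_def by blast
        have d': "d \<in> {1..n'}" "\<not> d \<le> n" using d by auto
        have "Zs y = S (d - n)" unfolding Zs_def using Zs_owner[OF d'(1) d(2)] D_new_ne[OF d'] d(2) by auto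
        moreover have "S (d - n) \<noteq> {}" using S_ne new_range[OF d'] by blast
        ultimately show False using y unfolding PhiY_def by auto
      qed
    qed
  qed
  have 3: "PhiXs Y Xs Zs = Xs'"
  proof
    fix c show "PhiXs Y Xs Zs c = Xs' c"
    proof (cases "c \<in> {1..n'}")
      case False
      then show ?thesis unfolding PhiXs_def using PiE_arb[OF Xs'P False] n'_eq by auto
    next
      case c: True
      show ?thesis
      proof (cases "c \<le> n")
        case True
        then show ?thesis unfolding PhiXs_def Xs_def PsiXs_def using c by simp
      next
        case False
        have "{y \<in> Y. Zs y = S (c - n)} = Xs' c"
        proof
          show "{y \<in> Y. Zs y = S (c - n)} \<subseteq> Xs' c"
            using newD_eq[OF c False] unfolding Y_def Zs_def by blast
          show "Xs' c \<subseteq> {y \<in> Y. Zs y = S (c - n)}"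
          proof
            fix y assume y: "y \<in> Xs' c"
            then have "Zs y = S (c - n)" unfolding Zs_def using Zs_owner[OF c y] D_new_ne[OF c False] by auto
            moreover have "y \<in> Y" unfolding Y_def using newXs_sub[OF c False] y by blast
            ultimately show "y \<in> {y \<in> Y. Zs y = S (c - n)}" by simp
          qed
        qed
        then show ?thesis unfolding PhiXs_def using c False by auto
      qed
    qed
  qed
  have 2: "Phia X Y a Xs Zs = a'"
  proof
    fix c show "Phia X Y a Xs Zs c = a' c"
    proof (cases "c \<in> {1..n'}")
      case False
      then show ?thesis unfolding Phia_def using PiE_arb[OF a'P False] n'_eq by auto
    next
      case c: True
      show ?thesis
      proof (cases "c \<le> n")
        case True
        then have c1: "c \<in> {1..n}" using c by auto
        note R = repr_old[OF c1 ac'[OF c]]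
        have ac: "a c = Bf c (a' c)" unfolding a_def Psia_def using c1 by simp
        have Xc: "Xs c = Xs' c" unfolding Xs_def PsiXs_def using c1 by simp
        have "idx (\<Union>(Zs ` Xs c)) = Jf c (a' c)"
        proof (cases "Xs' c = {}")
          case True
          then have "Jf c (a' c) = 0" using nq[OF c] c1 by auto
          then show ?thesis using Xc True by simp
        next
          case False
          then obtain x where x: "Xs' c = {x}" using le1_cases nq[OF c] by blast
          have "Zs x = S (Jf c (a' c))" unfolding Zs_def using Zs_owner[OF c] x D_old'[OF c1] by simp
          then show ?thesis using Xc x S_idx R by simp
        qed
        then show ?thesis unfolding Phia_def using c1 ac R by simp
      next
        case False
        note NewD = D_def[of c "a' c"]
        have cond: "((\<exists>y\<in>Y. Zs y = S (c - n)) \<or> (\<exists>z. S (c - n) = {z} \<and> z \<notin> \<Union>(Zs ` X))) \<longleftrightarrow> a' c = 2"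
        proof
          assume A: "(\<exists>y\<in>Y. Zs y = S (c - n)) \<or> (\<exists>z. S (c - n) = {z} \<and> z \<notin> \<Union>(Zs ` X))"
          show "a' c = 2"
          proof (rule ccontr)
            assume n2: "a' c \<noteq> 2"
            then have a1: "a' c = 1" using new12[OF c False] by auto
            then have Xe: "Xs' c = {}" using nq[OF c] False by auto
            have Dc: "D c (a' c) = {}" unfolding D_def using False a1 by simp
            show False using A
            proof
              assume "\<exists>y\<in>Y. Zs y = S (c - n)"
              then obtain y where "y \<in> Y" "Zs y = S (c - n)" by blast
              then have "y \<in> Xs' c" using newD_eq[OF c False] unfolding Y_def Zs_def by blast
              then show False using Xe by simp
            next
              assume "\<exists>z. S (c - n) = {z} \<and> z \<notin> \<Union>(Zs ` X)"
              then obtain z where z: "S (c - n) = {z}" "z \<notin> \<Union>(Zs ` X)" by blast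
              have "z \<in> Z" using S_sub[of "c - n"] new_range[OF c False] z by auto
              then obtain d where d: "d \<in> {1..n'}" "z \<in> D d (a' d)" using GC(2) by blast
              have dc: "d \<noteq> c" using d Dc by auto
              show False
              proof (cases "Xs' d = {}")
                case False
                then obtain x where x: "x \<in> Xs' d" by blast
                have "x \<in> X" using Xs'_sub[OF d(1)] x by auto
                moreover have "Zs x = D d (a' d)" unfolding Zs_def using Zs_owner[OF d(1) x] .
                ultimately show False using z d by auto
              next
                case True
                show False
                proof (cases "d \<le> n")
                  case True
                  then have "Jf d (a' d) = 0" using nq[OF d(1)] \<open>Xs' d = {}\<close> by auto
                  then show False using d True unfolding D_def by simp
                next
                  case dn: False
                  have "a' d \<noteq> 1" using d dn unfolding D_def by auto
                  then have "a' d = 2" using new12[OF d(1) dn] by auto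
                  then have "card (S (d - n)) = 1" using nq[OF d(1)] dn \<open>Xs' d = {}\<close> by auto
                  moreover have "z \<in> S (d - n)" using d \<open>a' d = 2\<close> dn unfolding D_def by simp
                  ultimately have "S (d - n) = {z}" by (metis card_1_singletonE singletonD)
                  then have "d - n = c - n" using z S_inj new_range[OF d(1) dn] new_range[OF c False] by auto
                  then show False using dc dn False by auto
                qed
              qed
            qed
          qed
        next
          assume a2: "a' c = 2"
          show "(\<exists>y\<in>Y. Zs y = S (c - n)) \<or> (\<exists>z. S (c - n) = {z} \<and> z \<notin> \<Union>(Zs ` X))"
          proof (cases "Xs' c = {}")
            case False
            then obtain y where y: "y \<in> Xs' c" by blast
            have "Zs y = S (c - n)" unfolding Zs_def
              using trans[OF Zs_owner[OF c y] conjunct2[OF D_new_ne[OF c \<open>\<not> c \<le> n\<close> False]]] .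
            moreover have "y \<in> Y" unfolding Y_def using newXs_sub[OF c \<open>\<not> c \<le> n\<close>] y by blast
            ultimately show ?thesis by blast
          next
            case True
            have "card (S (c - n)) = 1" using nq[OF c] \<open>\<not> c \<le> n\<close> a2 True by auto
            then obtain z where z: "S (c - n) = {z}" by (metis card_1_singletonE)
            have Dc: "D c (a' c) = {z}" unfolding D_def using \<open>\<not> c \<le> n\<close> a2 z by simp
            have "z \<notin> Zs x" if x: "x \<in> X" for x
            proof (cases "x \<in> Y'")
              case True then show ?thesis unfolding Zs_def using Zs_Y' by simp
            next
              case False
              then obtain d where d: "d \<in> {1..n'}" "x \<in> Xs' d" using Xs'U x by blast
              have "d \<noteq> c" using d True by auto
              then have "D d (a' d) \<inter> D c (a' c) = {}" using DD[OF d(1) c] by simp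
              then show ?thesis unfolding Zs_def using Zs_owner[OF d] Dc by auto
            qed
            then show ?thesis using z by blast
          qed
        qed
        have "Phia X Y a Xs Zs c = (if a' c = 2 then 2 else 1)"
          unfolding Phia_def using c False cond by auto
        then show ?thesis using new12[OF c False] by auto
      qed
    qed
  qed
  show ?thesis unfolding Psi_def Phi_def using 1 2 3 unfolding Y_def a_def Xs_def Zs_def by simp
qed

end


lemma finite_AA: "finite AA"
  by (rule finite_subset[of _ "Pi\<^sub>E {1..n} (\<lambda>i. {1..h i})"]) (auto simp: AA_def glob_hyps_def intro!: finite_PiE)

lemma finite_AA': "finite AA'"
  by (rule finite_subset[of _ "Pi\<^sub>E {1..n'} (\<lambda>i. {1..h' i})"]) (auto simp: AA'_def glob_hyps_def intro!: finite_PiE)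

lemma finite_decomps: "finite W \<Longrightarrow> finite (decomps nn W)"
  by (rule finite_subset[of _ "Pi\<^sub>E {1..nn} (\<lambda>_. Pow W)"]) (auto simp: decomps_def intro!: finite_PiE)

lemma finite_AS: "finite X \<Longrightarrow> finite (AS X)"
  by (rule finite_subset[of _ "Pi\<^sub>E X (\<lambda>_. Pow Z)"]) (auto simp: AS_def finZ intro!: finite_PiE)

lemma finite_IL: "finite X \<Longrightarrow> finite (IL X)"
  unfolding IL_def using finite_AA finite_decomps finite_AS by (intro finite_SigmaI) auto

lemma finite_IR: "finite X \<Longrightarrow> finite (IR X)"
  unfolding IR_def using finite_AA' by (intro finite_SigmaI finite_decomps) auto

lemma core: "finite X \<Longrightarrow> (\<Sum>p\<in>IL X. TL X p) = (\<Sum>q\<in>IR X. TR q)"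
proof -
  assume fX: "finite X"
  have "(\<Sum>p\<in>IL X. TL X p) = (\<Sum>p\<in>{p \<in> IL X. niceL p}. TL X p)"
    using finite_IL[OF fX] Z1[OF fX] by (intro sum.mono_neutral_right) auto
  also have "\<dots> = (\<Sum>q\<in>{q \<in> IR X. niceR q}. TR q)"
  proof (rule sum.reindex_bij_witness[of _ "Psi X" "Phi X"])
    fix p assume p: "p \<in> {p \<in> IL X. niceL p}"
    obtain Y a Xs Zs where pe: "p = (Y, a, Xs, Zs)" by (cases p) auto
    have A: "Y \<subseteq> X" "a \<in> AA" "Xs \<in> decomps n (X - Y)" "Zs \<in> AS X" "\<forall>i\<in>{1..n}. le1 (Xs i)"
      using p pe unfolding IL_def niceL_def by auto
    show "Psi X (Phi X p) = p" unfolding pe by (rule Psi_Phi[OF fX A])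
    show "Phi X p \<in> {q \<in> IR X. niceR q}" unfolding pe using Phi_IR[OF fX A] Phi_niceR[OF fX A] by simp
    show "TR (Phi X p) = TL X p" unfolding pe by (rule T1[OF fX A])
  next
    fix q assume q: "q \<in> {q \<in> IR X. niceR q}"
    obtain Y a Xs where qe: "q = (Y, a, Xs)" by (cases q) auto
    have A: "Y \<subseteq> X" "a \<in> AA'" "Xs \<in> decomps n' (X - Y)" "niceR (Y, a, Xs)"
      using q qe unfolding IR_def by auto
    show "Phi X (Psi X q) = q" unfolding qe by (rule Phi_Psi[OF fX A])
    show "Psi X q \<in> {p \<in> IL X. niceL p}" unfolding qe using Psi_IL[OF fX A] Psi_niceL[OF fX A] by simp
  qed
  also have "\<dots> = (\<Sum>q\<in>IR X. TR q)"
    using finite_IR[OF fX] Z2[OF fX] by (intro sum.mono_neutral_left) auto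
  finally show ?thesis .
qed

lemma sum_Sigma': "finite A \<Longrightarrow> (\<And>x. x \<in> A \<Longrightarrow> finite (B x)) \<Longrightarrow> sum ff (Sigma A B) = (\<Sum>x\<in>A. \<Sum>y\<in>B x. ff (x, y))"
  by (subst sum.Sigma) (auto simp: case_prod_beta')


definition "Sig = (\<Sum>a\<in>AA. \<Prod>i\<in>{1..n}. w i (a i))"
definition "Sig' = (\<Sum>a\<in>AA'. \<Prod>c\<in>{1..n'}. w' c (a c))"

lemma IL_sum: "finite X \<Longrightarrow> (\<Sum>p\<in>IL X. TL X p) =
  (\<Sum>Y\<in>Pow X. \<Sum>a\<in>AA. \<Sum>Xs\<in>decomps n (X - Y). \<Sum>Zs\<in>AS X. TL X (Y, a, Xs, Zs))"
  unfolding IL_def by (simp add: sum_Sigma' finite_AA finite_decomps finite_AS)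

lemma IR_sum: "finite X \<Longrightarrow> (\<Sum>q\<in>IR X. TR q) =
  (\<Sum>Y\<in>Pow X. \<Sum>a\<in>AA'. \<Sum>Xs\<in>decomps n' (X - Y). TR (Y, a, Xs))"
  unfolding IR_def by (simp add: sum_Sigma' finite_AA' finite_decomps)

lemma LHS_eq: "finite X \<Longrightarrow> meas_lik lamC g Z X * pmbm_dens mu lam n h w r f M Mk1 X =
   (exp (- (\<integral>x. lam x \<partial>mu)) * exp (- (\<integral>z. lamC z \<partial>lborel)) / Sig) * (\<Sum>p\<in>IL X. TL X p)"
proof -
  assume fX: "finite X"
  define K where "K = exp (- (\<integral>x. lam x \<partial>mu)) * exp (- (\<integral>z. lamC z \<partial>lborel)) / Sig"
  define LK where "LK = meas_lik lamC g Z X"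
  have LK: "LK = (\<Sum>Zs\<in>AS X. exp (- (\<integral>z. lamC z \<partial>lborel)) * (\<Prod>z\<in>Z - (\<Union>x\<in>X. Zs x). lamC z) *
        (\<Prod>x\<in>X. g (Zs x) x))" unfolding LK_def meas_lik_def AS_def ..
  have inner: "LK * (ppp_dens mu lam Y * mbm_dens n h w r f M Mk1 (X - Y)) =
     (\<Sum>a\<in>AA. \<Sum>Xs\<in>decomps n (X - Y). \<Sum>Zs\<in>AS X. K * TL X (Y, a, Xs, Zs))" for Y
  proof -
    have "LK * (ppp_dens mu lam Y * mbm_dens n h w r f M Mk1 (X - Y)) =
       (\<Sum>a\<in>AA. \<Sum>Xs\<in>decomps n (X - Y). LK * (ppp_dens mu lam Y * ((\<Prod>i\<in>{1..n}. w i (a i)) / Sig) *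
           (\<Prod>i\<in>{1..n}. bern_dens (r i (a i)) (f i (a i)) (Xs i))))"
      unfolding mbm_dens_def AA_def[symmetric] Sig_def[symmetric]
      by (simp add: sum_distrib_left mult.assoc)
    also have "\<dots> = (\<Sum>a\<in>AA. \<Sum>Xs\<in>decomps n (X - Y). \<Sum>Zs\<in>AS X. K * TL X (Y, a, Xs, Zs))"
    proof (intro sum.cong refl)
      fix a Xs
      show "LK * (ppp_dens mu lam Y * ((\<Prod>i\<in>{1..n}. w i (a i)) / Sig) *
           (\<Prod>i\<in>{1..n}. bern_dens (r i (a i)) (f i (a i)) (Xs i))) = (\<Sum>Zs\<in>AS X. K * TL X (Y, a, Xs, Zs))"
        unfolding LK sum_distrib_right
        by (intro sum.cong refl) (simp add: TL_def K_def ppp_dens_def field_simps)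
    qed
    finally show ?thesis .
  qed
  have "LK * pmbm_dens mu lam n h w r f M Mk1 X = (\<Sum>Y\<in>Pow X. LK * (ppp_dens mu lam Y * mbm_dens n h w r f M Mk1 (X - Y)))"
    unfolding pmbm_dens_def by (simp add: sum_distrib_left)
  also have "\<dots> = (\<Sum>Y\<in>Pow X. \<Sum>a\<in>AA. \<Sum>Xs\<in>decomps n (X - Y). \<Sum>Zs\<in>AS X. K * TL X (Y, a, Xs, Zs))"
    using inner by simp
  also have "\<dots> = K * (\<Sum>p\<in>IL X. TL X p)"
    unfolding IL_sum[OF fX] by (simp add: sum_distrib_left)
  finally show ?thesis unfolding LK_def K_def .
qed

lemma RHS_eq: "finite X \<Longrightarrow> pmbm_dens mu lam' n' h' w' r' f' M' Mk X =
   (exp (- (\<integral>x. lam' x \<partial>mu)) / Sig') * (\<Sum>q\<in>IR X. TR q)"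
proof -
  assume fX: "finite X"
  define K where "K = exp (- (\<integral>x. lam' x \<partial>mu)) / Sig'"
  have "pmbm_dens mu lam' n' h' w' r' f' M' Mk X =
     (\<Sum>Y\<in>Pow X. \<Sum>a\<in>AA'. \<Sum>Xs\<in>decomps n' (X - Y). K * TR (Y, a, Xs))"
    unfolding pmbm_dens_def mbm_dens_def AA'_def[symmetric] Sig'_def[symmetric]
    by (simp add: sum_distrib_left TR_def K_def ppp_dens_def field_simps)
  also have "\<dots> = K * (\<Sum>q\<in>IR X. TR q)"
    unfolding IR_sum[OF fX] by (simp add: sum_distrib_left)
  finally show ?thesis unfolding K_def .
qed


lemma Sig_pos: "Sig > 0" using w_norm unfolding Sig_def AA_def Mk1_def .

lemma w'_nonneg: "a' \<in> AA' \<Longrightarrow> c \<in> {1..n'} \<Longrightarrow> w' c (a' c) \<ge> 0"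
proof -
  assume a': "a' \<in> AA'" and c: "c \<in> {1..n'}"
  have ac: "a' c \<in> {1..h' c}" using a' c unfolding AA'_def glob_hyps_def by (auto simp: PiE_iff)
  show ?thesis
  proof (cases "c \<le> n")
    case True
    then have c1: "c \<in> {1..n}" using c by auto
    note R = repr_old[OF c1 ac]
    define b where "b = Bf c (a' c)"
    define j where "j = Jf c (a' c)"
    have b: "b \<in> {1..h c}" and j: "j \<le> NN" and e: "a' c = b + h c * j" using R unfolding b_def j_def by auto
    have wb: "w c b \<ge> 0" and rb: "r c b \<ge> 0" using w_nonneg r_range c1 b by auto
    show ?thesis
    proof (cases "j = 0")
      case True
      have "w' c b = w c b * (1 - r c b + r c b * (\<integral>x. f c b x * g {} x \<partial>mu))" using upd_miss c1 b by auto
      then show ?thesis using e True miss_facts[OF c1 b] wb by simp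
    next
      case False
      then have j': "j \<in> {1..2 ^ mc k - 1}" using j unfolding NN_def m_def by auto
      have "w' c (b + h c * j) = w c b * r c b * (\<integral>x. f c b x * g (sub j) x \<partial>mu)" using upd_det c1 b j' by auto
      moreover have "(\<integral>x. f c b x * g (sub j) x \<partial>mu) > 0" using l_det_pos c1 b j' by auto
      ultimately show ?thesis using e wb rb by simp
    qed
  next
    case False
    then have "a' c = 1 \<or> a' c = 2" using ac h'_new[OF c False] by auto
    then show ?thesis using new_facts[OF c False] w'2_pos[OF c False] by auto
  qed
qed

lemma Sig'_pos: "Sig' > 0"
proof -
  have "Sig \<noteq> 0" using Sig_pos by simp
  then obtain a0 where a0: "a0 \<in> AA" "(\<Prod>i\<in>{1..n}. w i (a0 i)) \<noteq> 0"
    unfolding Sig_def by (meson sum.not_neutral_contains_not_neutral)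
  have a0P: "a0 \<in> Pi\<^sub>E {1..n} (\<lambda>i. {1..h i})" using a0 unfolding AA_def glob_hyps_def by auto
  have wpos: "w i (a0 i) > 0" if i: "i \<in> {1..n}" for i
  proof -
    have "a0 i \<in> {1..h i}" using a0P i by (auto simp: PiE_iff)
    then have "w i (a0 i) \<ge> 0" using w_nonneg i by auto
    moreover have "w i (a0 i) \<noteq> 0" using a0(2) i by auto
    ultimately show ?thesis by simp
  qed
  define Xs0 :: "nat \<Rightarrow> 'x set" where "Xs0 = restrict (\<lambda>_. {}) {1..n}"
  define Zs0 :: "'x \<Rightarrow> 'z set" where "Zs0 = restrict (\<lambda>_. {}) {}"
  have A: "finite ({} :: 'x set)" "{} \<subseteq> ({} :: 'x set)" "a0 \<in> AA" "Xs0 \<in> decomps n ({} - {})" "Zs0 \<in> AS {}"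
      "\<forall>i\<in>{1..n}. le1 (Xs0 i)"
    using a0 unfolding Xs0_def Zs0_def decomps_def AS_def le1_def by auto
  define a'0 where "a'0 = Phia {} {} a0 Xs0 Zs0"
  have a'0: "a'0 \<in> AA'" unfolding a'0_def by (rule Phia_AA'[OF A])
  have pos: "w' c (a'0 c) > 0" if c: "c \<in> {1..n'}" for c
  proof (cases "c \<le> n")
    case True
    then have c1: "c \<in> {1..n}" using c by auto
    have ac: "a0 c \<in> {1..h c}" using a0P c1 by (auto simp: PiE_iff)
    have "a'0 c = a0 c" unfolding a'0_def Phia_old[OF A c1] using c1 by (simp add: Xs0_def)
    moreover have "w' c (a0 c) = w c (a0 c) * (1 - r c (a0 c) + r c (a0 c) * (\<integral>x. f c (a0 c) x * g {} x \<partial>mu))"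
      using upd_miss c1 ac by auto
    ultimately show ?thesis using wpos[OF c1] miss_facts[OF c1 ac] by simp
  next
    case False
    have "a'0 c = 1 \<or> a'0 c = 2" unfolding a'0_def Phia_new[OF A c False] by auto
    then show ?thesis using new_facts[OF c False] w'2_pos[OF c False] by auto
  qed
  have "0 < (\<Prod>c\<in>{1..n'}. w' c (a'0 c))" using pos by (intro prod_pos) auto
  also have "\<dots> \<le> Sig'" unfolding Sig'_def
    using a'0 finite_AA' w'_nonneg by (intro member_le_sum) (auto intro!: prod_nonneg)
  finally show ?thesis .
qed

lemma main: "\<exists>c>0. \<forall>X. finite X \<longrightarrow>
     meas_lik lamC g (zs ` {1..mc k}) X * pmbm_dens mu lam n h w r f M (meas_pairs mc (k - 1)) X
   = c * pmbm_dens mu lam' n' h' w' r' f' M' (meas_pairs mc k) X"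
proof -
  define K1 where "K1 = exp (- (\<integral>x. lam x \<partial>mu)) * exp (- (\<integral>z. lamC z \<partial>lborel)) / Sig"
  define K2 where "K2 = exp (- (\<integral>x. lam' x \<partial>mu)) / Sig'"
  have K1: "K1 > 0" unfolding K1_def using Sig_pos by simp
  have K2: "K2 > 0" unfolding K2_def using Sig'_pos by simp
  show ?thesis
  proof (intro exI[of _ "K1 / K2"] conjI allI impI)
    show "K1 / K2 > 0" using K1 K2 by simp
    fix X :: "'x set" assume fX: "finite X"
    have "meas_lik lamC g (zs ` {1..mc k}) X * pmbm_dens mu lam n h w r f M (meas_pairs mc (k - 1)) X
       = K1 * (\<Sum>q\<in>IR X. TR q)"
      using LHS_eq[OF fX] core[OF fX] unfolding K1_def Z_def m_def Mk1_def by simp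
    also have "\<dots> = K1 / K2 * pmbm_dens mu lam' n' h' w' r' f' M' (meas_pairs mc k) X"
      using RHS_eq[OF fX] K2 unfolding K2_def[symmetric] Mk_def by simp
    finally show "meas_lik lamC g (zs ` {1..mc k}) X * pmbm_dens mu lam n h w r f M (meas_pairs mc (k - 1)) X
       = K1 / K2 * pmbm_dens mu lam' n' h' w' r' f' M' (meas_pairs mc k) X" .
  qed
qed

end

theorem theorem1:
  fixes mu :: "('x::{t2_space, second_countable_topology}) measure"
    and lam :: "'x \<Rightarrow> real"
    and lamC :: "real ^ 'nz \<Rightarrow> real"
    and g :: "(real ^ 'nz) set \<Rightarrow> 'x \<Rightarrow> real"
    and k :: nat and mc :: "nat \<Rightarrow> nat"
    and zs :: "nat \<Rightarrow> real ^ 'nz"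
    and sub :: "nat \<Rightarrow> (real ^ 'nz) set"
    and n :: nat and h :: "nat \<Rightarrow> nat"
    and w r :: "nat \<Rightarrow> nat \<Rightarrow> real"
    and f :: "nat \<Rightarrow> nat \<Rightarrow> 'x \<Rightarrow> real"
    and M :: "nat \<Rightarrow> nat \<Rightarrow> (nat \<times> nat) set"
    and n' :: nat and lam' :: "'x \<Rightarrow> real" and h' :: "nat \<Rightarrow> nat"
    and w' r' :: "nat \<Rightarrow> nat \<Rightarrow> real"
    and f' :: "nat \<Rightarrow> nat \<Rightarrow> 'x \<Rightarrow> real"
    and M' :: "nat \<Rightarrow> nat \<Rightarrow> (nat \<times> nat) set"
  assumes space_X: "locally_compact_space (euclidean :: 'x topology)"
    and mu_borel: "sets mu = sets borel"
    and lam_nonneg: "\<forall>x. lam x \<ge> 0" and lam_int: "integrable mu lam"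
    and lamC_nonneg: "\<forall>z. lamC z \<ge> 0" and lamC_int: "integrable lborel lamC"
    and g_nonneg: "\<forall>S x. g S x \<ge> 0"
    and k_pos: "k \<ge> 1"
    and zs_inj: "inj_on zs {1..mc k}"
    and sub_bij: "bij_betw sub {1..2 ^ mc k - 1} {S. S \<subseteq> zs ` {1..mc k} \<and> S \<noteq> {}}"
    and M_sub: "\<forall>i\<in>{1..n}. \<forall>a\<in>{1..h i}. M i a \<subseteq> meas_pairs mc (k - 1)"
    and w_nonneg: "\<forall>i\<in>{1..n}. \<forall>a\<in>{1..h i}. w i a \<ge> 0"
    and r_range: "\<forall>i\<in>{1..n}. \<forall>a\<in>{1..h i}. 0 \<le> r i a \<and> r i a \<le> 1"
    and f_dens: "\<forall>i\<in>{1..n}. \<forall>a\<in>{1..h i}. (\<forall>x. f i a x \<ge> 0) \<and> integrable mu (f i a)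
                   \<and> (\<integral>x. f i a x \<partial>mu) = 1"
    and w_norm: "(\<Sum>a\<in>glob_hyps n h M (meas_pairs mc (k - 1)). \<Prod>i\<in>{1..n}. w i (a i)) > 0"
    and l_miss_pos: "\<forall>i\<in>{1..n}. \<forall>a\<in>{1..h i}. (\<integral>x. f i a x * g {} x \<partial>mu) > 0"
    and l_det_pos: "\<forall>i\<in>{1..n}. \<forall>a\<in>{1..h i}. \<forall>j\<in>{1..2 ^ mc k - 1}.
                      (\<integral>x. f i a x * g (sub j) x \<partial>mu) > 0"
    and l_new_pos: "\<forall>j\<in>{1..2 ^ mc k - 1}. (\<integral>x. lam x * g (sub j) x \<partial>mu) > 0"
    \<comment> \<open>(i)\<close>
    and upd_n: "n' = n + 2 ^ mc k - 1"
    and upd_lam: "\<forall>x. lam' x = g {} x * lam x"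
    \<comment> \<open>(ii) previously existing Bernoullis\<close>
    and upd_h_old: "\<forall>i\<in>{1..n}. h' i = 2 ^ mc k * h i"
    and upd_miss: "\<forall>i\<in>{1..n}. \<forall>a\<in>{1..h i}.
        M' i a = M i a \<and>
        w' i a = w i a * (1 - r i a + r i a * (\<integral>x. f i a x * g {} x \<partial>mu)) \<and>
        r' i a = r i a * (\<integral>x. f i a x * g {} x \<partial>mu)
                 / (1 - r i a + r i a * (\<integral>x. f i a x * g {} x \<partial>mu)) \<and>
        (\<forall>x. f' i a x = g {} x * f i a x / (\<integral>x. f i a x * g {} x \<partial>mu))"
    and upd_det: "\<forall>i\<in>{1..n}. \<forall>b\<in>{1..h i}. \<forall>j\<in>{1..2 ^ mc k - 1}.
        r' i (b + h i * j) = 1 \<and>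
        M' i (b + h i * j) = M i b \<union> {(k, p) | p. p \<in> {1..mc k} \<and> zs p \<in> sub j} \<and>
        w' i (b + h i * j) = w i b * r i b * (\<integral>x. f i b x * g (sub j) x \<partial>mu) \<and>
        (\<forall>x. f' i (b + h i * j) x = g (sub j) x * f i b x / (\<integral>x. f i b x * g (sub j) x \<partial>mu))"
    \<comment> \<open>(iii) new Bernoullis\<close>
    and upd_new: "\<forall>j\<in>{1..2 ^ mc k - 1}.
        h' (n + j) = 2 \<and>
        M' (n + j) 1 = {} \<and> w' (n + j) 1 = 1 \<and> r' (n + j) 1 = 0 \<and>
        M' (n + j) 2 = {(k, p) | p. p \<in> {1..mc k} \<and> zs p \<in> sub j} \<and>
        w' (n + j) 2 = (if card (sub j) = 1 then \<Prod>z\<in>sub j. lamC z else 0)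
                       + (\<integral>x. lam x * g (sub j) x \<partial>mu) \<and>
        r' (n + j) 2 = (\<integral>x. lam x * g (sub j) x \<partial>mu) / w' (n + j) 2 \<and>
        (\<forall>x. f' (n + j) 2 x = g (sub j) x * lam x / (\<integral>x. lam x * g (sub j) x \<partial>mu))"
  shows "\<exists>c > 0. \<forall>X. finite X \<longrightarrow>
           meas_lik lamC g (zs ` {1..mc k}) X * pmbm_dens mu lam n h w r f M (meas_pairs mc (k - 1)) X
         = c * pmbm_dens mu lam' n' h' w' r' f' M' (meas_pairs mc k) X"
  proof -
  interpret P: pmbm_setup lamC g mu lam k mc zs sub n h w r f M n' lam' h' w' r' f' M'
    using lamC_nonneg k_pos zs_inj sub_bij M_sub w_nonneg r_range w_norm l_miss_pos l_det_pos l_new_pos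
      upd_n upd_lam upd_h_old upd_miss upd_det upd_new
    unfolding pmbm_setup_def by blast
  show ?thesis by (rule P.main)
qed

end
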